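(* Let $\pi_0$ be an irreducible representation of $\mathrm{SO}(V)$ (if $d$ is even, assume $\mathrm{char}\,\mathcal C\ne2$). Then $$\Gamma(\pi_0,\chi)=\chi(-2)^{-d}\,j(\pi_0,\chi)\cdot\begin{cases}\omega_{\pi_0}(-1)&d\text{ even},\\1&d\text{ odd},\end{cases}$$ where $j(\pi_0,\chi)\,\mathrm{id}_{\pi_0}=|\mathfrak g|^{-1/2}\sum_{g\in\mathrm{SO}(V),\,\det(\mathrm{id}+g)\ne0}\chi(\det(\mathrm{id}_V+g))\pi_0(g)$.
   Context: Let $\mathbb F$ be a finite field of odd cardinality $q$ and $\mathcal C$ an algebraically closed field of characteristic not dividing $q$ with fixed $\sqrt q$. Let $(V,\langle\cdot,\cdot\rangle)$ be a nondegenerate symmetric bilinear space over $\mathbb F$ of dimension $d$, $G(V)=\mathrm O(V)$, $\mathrm{SO}(V)=\{g\in\mathrm O(V):\det g=1\}$, $\mathfrak g$ the Lie algebra of $\mathrm O(V)$, $\chi:\mathbb F^\times\to\mathcal C^\times$ a character. For an irreducible representation $\pi$ of $\mathrm O(V)$, $\Gamma(\pi,\chi)$ is defined as follows. Doubling: $V^\square=V^+\oplus V^-$ with form $\langle v_1,v_2\rangle-\langle w_1,w_2\rangle$ on $v_1^++w_1^-,v_2^++w_2^-$; $V^\Delta=\{v^++v^-\}$; $\iota(g_1,g_2)(v^++w^-)=(g_1v)^++(g_2w)^-$; $P_V$ the stabilizer of $V^\Delta$ in $\mathrm O(V^\square)$, $N_V$ its unipotent radical, $w_V=\iota(\mathrm{id},-\mathrm{id})$;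 $I_V(\mu)=\{f:f(pg)=\mu(\det(p|_{V^\Delta}))f(g),\,p\in P_V\}$; $(M_V(\chi)f)(g)=|\mathfrak g|^{-1/2}\sum_{u\in N_V}f(w_Vug)$ maps $I_V(\chi)\to I_V(\chi^{-1})$; $Z_{V,\mu,\pi}(f)=\sum_{g\in\mathrm O(V)}f(\iota(g,\mathrm{id}))\pi(g)$; $f_{0,V}\in I_V(\chi)$ is supported on $P_V$ with $f_{0,V}(\mathrm{id})=1$; and $\Gamma(\pi,\chi)\,\mathrm{id}_\pi=Z_{V,\chi^{-1},\pi}(M_V(\chi)f_{0,V})$. Extension to $\mathrm{SO}(V)$: if $d$ is odd, $\Gamma(\pi_0,\chi):=\Gamma(\pi_0^+,\chi)$ where $\pi_0^+$ is the extension of $\pi_0$ to $\mathrm O(V)=\{\pm\mathrm{id}\}\times\mathrm{SO}(V)$ with $\pi_0^+(-\mathrm{id})=\mathrm{id}$. If $d$ is even: if $\pi_0$ extends to an irreducible representation $\pi_0'$ of $\mathrm O(V)$, $\Gamma(\pi_0,\chi):=\Gamma(\pi_0',\chi)$ (independent of the extension); otherwise $\Gamma(\pi_0,\chi):=\Gamma(\mathrm{Ind}_{\mathrm{SO}(V)}^{\mathrm O(V)}\pi_0,\chi)$ (this induced representation is irreducible). $\omega_{\pi_0}$ is the central character of $\pi_0$. *)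

theory Defs
  imports "HOL-Analysis.Analysis" "HOL-Computational_Algebra.Polynomial"
begin

definition orth_group :: "'f::field^'n::finite^'n \<Rightarrow> ('f^'n^'n) set" where
  "orth_group B = {g. transpose g ** B ** g = B}"

definition sorth_group :: "'f::field^'n::finite^'n \<Rightarrow> ('f^'n^'n) set" where
  "sorth_group B = {g \<in> orth_group B. det g = 1}"

definition lie_orth :: "'f::field^'n::finite^'n \<Rightarrow> ('f^'n^'n) set" where
  "lie_orth B = {X. transpose X ** B + B ** X = 0}"

(* |g|^(1/2), computed with the fixed square root sq of q: |g| = q^k, |g|^(1/2) = sq^k *)
definition lie_sqrt_card :: "'f::{finite,field}^'n::finite^'n \<Rightarrow> 'c::field \<Rightarrow> 'c" where
  "lie_sqrt_card B sq = sq ^ (THE k. card (lie_orth B) = CARD('f) ^ k)"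

(* ---------- Doubling V^sq = V^+ \<oplus> V^-, coordinates indexed by 'n + 'n ---------- *)

definition dbl_form :: "'f::field^'n::finite^'n \<Rightarrow> 'f^('n+'n)^('n+'n)" where
  "dbl_form B = (\<chi> a b. case (a, b) of
       (Inl i, Inl j) \<Rightarrow> B $ i $ j
     | (Inr i, Inr j) \<Rightarrow> - (B $ i $ j)
     | _ \<Rightarrow> 0)"

definition iota :: "'f::field^'n::finite^'n \<Rightarrow> 'f^'n^'n \<Rightarrow> 'f^('n+'n)^('n+'n)" where
  "iota g1 g2 = (\<chi> a b. case (a, b) of
       (Inl i, Inl j) \<Rightarrow> g1 $ i $ j
     | (Inr i, Inr j) \<Rightarrow> g2 $ i $ j
     | _ \<Rightarrow> 0)"

definition diag_emb :: "'f::field^'n::finite \<Rightarrow> 'f^('n+'n)" where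
  "diag_emb v = (\<chi> a. case a of Inl i \<Rightarrow> v $ i | Inr i \<Rightarrow> v $ i)"

definition V_Delta :: "('f::field^('n::finite+'n)) set" where
  "V_Delta = range diag_emb"

definition P_V :: "'f::field^'n::finite^'n \<Rightarrow> ('f^('n+'n)^('n+'n)) set" where
  "P_V B = {p \<in> orth_group (dbl_form B). \<forall>v. p *v diag_emb v \<in> V_Delta}"

(* unipotent radical of the stabiliser of the Lagrangian V^Delta: elements acting
   trivially on V^Delta and on V^sq / V^Delta *)
definition N_V :: "'f::field^'n::finite^'n \<Rightarrow> ('f^('n+'n)^('n+'n)) set" where
  "N_V B = {p \<in> P_V B. (\<forall>v. p *v diag_emb v = diag_emb v) \<and> (\<forall>x. p *v x - x \<in> V_Delta)}"

definition w_V :: "('f::field^('n::finite+'n)^('n+'n))" where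
  "w_V = iota (mat 1) (mat (-1))"

(* matrix of p|_{V^Delta} w.r.t. the identification V \<cong> V^Delta, v \<mapsto> v^+ + v^- *)
definition restr_Delta :: "'f::field^('n::finite+'n)^('n+'n) \<Rightarrow> 'f^'n^'n" where
  "restr_Delta p = (\<chi> i j. (p *v diag_emb (axis j 1)) $ Inl i)"

definition det_Delta :: "'f::field^('n::finite+'n)^('n+'n) \<Rightarrow> 'f" where
  "det_Delta p = det (restr_Delta p)"

definition f0_V :: "'f::field^'n::finite^'n \<Rightarrow> ('f \<Rightarrow> 'c::field) \<Rightarrow> 'f^('n+'n)^('n+'n) \<Rightarrow> 'c" where
  "f0_V B chi g = (if g \<in> P_V B then chi (det_Delta g) else 0)"

definition M_V :: "'f::{finite,field}^'n::finite^'n \<Rightarrow> 'c::field \<Rightarrow>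
    ('f^('n+'n)^('n+'n) \<Rightarrow> 'c) \<Rightarrow> 'f^('n+'n)^('n+'n) \<Rightarrow> 'c" where
  "M_V B sq f g = inverse (lie_sqrt_card B sq) * (\<Sum>u\<in>N_V B. f (w_V ** u ** g))"

(* ---------- Representations over 'c, realised on a subspace W of 'x \<Rightarrow> 'c ---------- *)

definition csubspace :: "('x \<Rightarrow> 'c::field) set \<Rightarrow> bool" where
  "csubspace W \<longleftrightarrow> (\<lambda>_. 0) \<in> W \<and> (\<forall>f\<in>W. \<forall>h\<in>W. (\<lambda>x. f x + h x) \<in> W)
     \<and> (\<forall>c. \<forall>f\<in>W. (\<lambda>x. c * f x) \<in> W)"

definition is_rep :: "('f::field^'n::finite^'n) set \<Rightarrow> ('x \<Rightarrow> 'c::field) set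
    \<Rightarrow> ('f^'n^'n \<Rightarrow> ('x \<Rightarrow> 'c) \<Rightarrow> ('x \<Rightarrow> 'c)) \<Rightarrow> bool" where
  "is_rep G W \<rho> \<longleftrightarrow> csubspace W
     \<and> (\<forall>g\<in>G. \<forall>f\<in>W. \<rho> g f \<in> W)
     \<and> (\<forall>g\<in>G. \<forall>f\<in>W. \<forall>h\<in>W. \<rho> g (\<lambda>x. f x + h x) = (\<lambda>x. \<rho> g f x + \<rho> g h x))
     \<and> (\<forall>g\<in>G. \<forall>c. \<forall>f\<in>W. \<rho> g (\<lambda>x. c * f x) = (\<lambda>x. c * \<rho> g f x))
     \<and> (\<forall>f\<in>W. \<rho> (mat 1) f = f)
     \<and> (\<forall>g\<in>G. \<forall>h\<in>G. \<forall>f\<in>W. \<rho> (g ** h) f = \<rho> g (\<rho> h f))"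

definition irred_rep :: "('f::field^'n::finite^'n) set \<Rightarrow> ('x \<Rightarrow> 'c::field) set
    \<Rightarrow> ('f^'n^'n \<Rightarrow> ('x \<Rightarrow> 'c) \<Rightarrow> ('x \<Rightarrow> 'c)) \<Rightarrow> bool" where
  "irred_rep G W \<rho> \<longleftrightarrow> is_rep G W \<rho> \<and> W \<noteq> {\<lambda>_. 0}
     \<and> (\<forall>U. csubspace U \<and> U \<subseteq> W \<and> (\<forall>g\<in>G. \<forall>f\<in>U. \<rho> g f \<in> U)
            \<longrightarrow> U = {\<lambda>_. 0} \<or> U = W)"

definition scalar_of :: "('x \<Rightarrow> 'c::field) set \<Rightarrow> (('x \<Rightarrow> 'c) \<Rightarrow> ('x \<Rightarrow> 'c)) \<Rightarrow> 'c" where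
  "scalar_of W T = (THE c. \<forall>f\<in>W. T f = (\<lambda>x. c * f x))"

definition central_char :: "('x \<Rightarrow> 'c::field) set \<Rightarrow> ('f::field^'n::finite^'n \<Rightarrow> ('x \<Rightarrow> 'c) \<Rightarrow> ('x \<Rightarrow> 'c))
    \<Rightarrow> 'f^'n^'n \<Rightarrow> 'c" where
  "central_char W \<rho> z = scalar_of W (\<rho> z)"

definition Z_V :: "'f::field^'n::finite^'n \<Rightarrow> ('f^'n^'n \<Rightarrow> ('x \<Rightarrow> 'c::field) \<Rightarrow> ('x \<Rightarrow> 'c))
    \<Rightarrow> ('f^('n+'n)^('n+'n) \<Rightarrow> 'c) \<Rightarrow> ('x \<Rightarrow> 'c) \<Rightarrow> ('x \<Rightarrow> 'c)" where
  "Z_V B \<rho> f \<phi> = (\<lambda>x. \<Sum>g\<in>orth_group B. f (iota g (mat 1)) * \<rho> g \<phi> x)"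

definition Gamma_O :: "'f::{finite,field}^'n::finite^'n \<Rightarrow> 'c::field \<Rightarrow> ('f \<Rightarrow> 'c)
    \<Rightarrow> ('x \<Rightarrow> 'c) set \<Rightarrow> ('f^'n^'n \<Rightarrow> ('x \<Rightarrow> 'c) \<Rightarrow> ('x \<Rightarrow> 'c)) \<Rightarrow> 'c" where
  "Gamma_O B sq chi W \<rho> = scalar_of W (Z_V B \<rho> (M_V B sq (f0_V B chi)))"

(* Ind_{SO(V)}^{O(V)} pi_0, realised on functions O(V) \<times> 'x \<Rightarrow> 'c *)
definition ind_space :: "'f::field^'n::finite^'n \<Rightarrow> ('x \<Rightarrow> 'c::field) set
    \<Rightarrow> ('f^'n^'n \<Rightarrow> ('x \<Rightarrow> 'c) \<Rightarrow> ('x \<Rightarrow> 'c)) \<Rightarrow> ((('f^'n^'n) \<times> 'x) \<Rightarrow> 'c) set" where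
  "ind_space B W \<rho> = {F. (\<forall>g\<in>orth_group B. (\<lambda>x. F (g, x)) \<in> W)
      \<and> (\<forall>g. g \<notin> orth_group B \<longrightarrow> (\<lambda>x. F (g, x)) = (\<lambda>_. 0))
      \<and> (\<forall>h\<in>sorth_group B. \<forall>g\<in>orth_group B. (\<lambda>x. F (h ** g, x)) = \<rho> h (\<lambda>x. F (g, x)))}"

definition ind_act :: "'f::field^'n::finite^'n \<Rightarrow> 'f^'n^'n \<Rightarrow> ((('f^'n^'n) \<times> 'x) \<Rightarrow> 'c::field)
    \<Rightarrow> ((('f^'n^'n) \<times> 'x) \<Rightarrow> 'c)" where
  "ind_act B g F = (\<lambda>(g', x). if g' \<in> orth_group B then F (g' ** g, x) else 0)"

definition Gamma_SO :: "'f::{finite,field}^'n::finite^'n \<Rightarrow> 'c::field \<Rightarrow> ('f \<Rightarrow> 'c)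
    \<Rightarrow> ('x \<Rightarrow> 'c) set \<Rightarrow> ('f^'n^'n \<Rightarrow> ('x \<Rightarrow> 'c) \<Rightarrow> ('x \<Rightarrow> 'c)) \<Rightarrow> 'c" where
  "Gamma_SO B sq chi W \<rho> =
    (if odd CARD('n) then
       Gamma_O B sq chi W (SOME \<rho>'. is_rep (orth_group B) W \<rho>'
          \<and> (\<forall>g\<in>sorth_group B. \<forall>f\<in>W. \<rho>' g f = \<rho> g f)
          \<and> (\<forall>f\<in>W. \<rho>' (mat (-1)) f = f))
     else if (\<exists>\<rho>'. irred_rep (orth_group B) W \<rho>' \<and> (\<forall>g\<in>sorth_group B. \<forall>f\<in>W. \<rho>' g f = \<rho> g f)) then
       Gamma_O B sq chi W (SOME \<rho>'. irred_rep (orth_group B) W \<rho>'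
          \<and> (\<forall>g\<in>sorth_group B. \<forall>f\<in>W. \<rho>' g f = \<rho> g f))
     else Gamma_O B sq chi (ind_space B W \<rho>) (ind_act B))"

definition j_factor :: "'f::{finite,field}^'n::finite^'n \<Rightarrow> 'c::field \<Rightarrow> ('f \<Rightarrow> 'c)
    \<Rightarrow> ('x \<Rightarrow> 'c) set \<Rightarrow> ('f^'n^'n \<Rightarrow> ('x \<Rightarrow> 'c) \<Rightarrow> ('x \<Rightarrow> 'c)) \<Rightarrow> 'c" where
  "j_factor B sq chi W \<rho> = scalar_of W (\<lambda>\<phi> x. inverse (lie_sqrt_card B sq) *
      (\<Sum>g\<in>{g\<in>sorth_group B. det (mat 1 + g) \<noteq> 0}. chi (det (mat 1 + g)) * \<rho> g \<phi> x))"

end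

theory Submission
  imports Defs "HOL-Library.Function_Algebras"
begin

definition form :: "'a::comm_ring_1^'n::finite^'n \<Rightarrow> 'a^'n \<Rightarrow> 'a^'n \<Rightarrow> 'a" where
  "form A x y = (\<Sum>i\<in>UNIV. \<Sum>j\<in>UNIV. x$i * A$i$j * y$j)"

lemma sum4_swap: "(\<Sum>i\<in>A. \<Sum>j\<in>B. \<Sum>k\<in>C. \<Sum>l\<in>D. f i j k l) = (\<Sum>k\<in>C. \<Sum>l\<in>D. \<Sum>i\<in>A. \<Sum>j\<in>B. f i j k l)"
proof -
 have "(\<Sum>i\<in>A. \<Sum>j\<in>B. \<Sum>k\<in>C. \<Sum>l\<in>D. f i j k l) = (\<Sum>i\<in>A. \<Sum>k\<in>C. \<Sum>j\<in>B. \<Sum>l\<in>D. f i j k l)" by (rule sum.cong[OF refl], rule sum.swap)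
 also have "\<dots> = (\<Sum>k\<in>C. \<Sum>i\<in>A. \<Sum>j\<in>B. \<Sum>l\<in>D. f i j k l)" by (rule sum.swap)
 also have "\<dots> = (\<Sum>k\<in>C. \<Sum>i\<in>A. \<Sum>l\<in>D. \<Sum>j\<in>B. f i j k l)" by (rule sum.cong[OF refl], rule sum.cong[OF refl], rule sum.swap)
 also have "\<dots> = (\<Sum>k\<in>C. \<Sum>l\<in>D. \<Sum>i\<in>A. \<Sum>j\<in>B. f i j k l)" by (rule sum.cong[OF refl], rule sum.swap)
 finally show ?thesis .
qed

lemma form_mult: "form A (M *v x) (N *v y) = form (transpose M ** A ** N) x y"
proof -
  have "form A (M *v x) (N *v y) = (\<Sum>i\<in>UNIV. \<Sum>j\<in>UNIV. \<Sum>k\<in>UNIV. \<Sum>l\<in>UNIV. x$k * (M$i$k * A$i$j * N$j$l) * y$l)"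
    unfolding form_def matrix_vector_mult_def
    by (simp add: sum_distrib_left sum_distrib_right mult.assoc mult.left_commute mult.commute)
  also have "\<dots> = (\<Sum>k\<in>UNIV. \<Sum>l\<in>UNIV. \<Sum>i\<in>UNIV. \<Sum>j\<in>UNIV. x$k * (M$i$k * A$i$j * N$j$l) * y$l)"
    by (rule sum4_swap)
  also have "\<dots> = (\<Sum>k\<in>UNIV. \<Sum>l\<in>UNIV. \<Sum>j\<in>UNIV. \<Sum>i\<in>UNIV. x$k * (M$i$k * A$i$j * N$j$l) * y$l)"
    by (rule sum.cong[OF refl], rule sum.cong[OF refl], rule sum.swap)
  also have "\<dots> = form (transpose M ** A ** N) x y"
    unfolding form_def matrix_matrix_mult_def transpose_def
    by (simp add: sum_distrib_left sum_distrib_right mult.assoc)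
  finally show ?thesis .
qed

lemma form_axis: "form A (axis i 1) (axis j 1) = A$i$j"
proof -
  have "\<And>a b. (axis i 1)$a * A$a$b * (axis j 1)$b = (if a = i then (if b = j then A$a$b else 0) else 0)"
    by (simp add: axis_def)
  then have "form A (axis i 1) (axis j 1) = (\<Sum>a\<in>UNIV. if a = i then A$a$j else 0)"
    unfolding form_def by (intro sum.cong refl) (simp add: sum.delta')
  then show ?thesis by (simp add: sum.delta')
qed

lemma orth_iff: "g \<in> orth_group A \<longleftrightarrow> (\<forall>x y. form A (g *v x) (g *v y) = form A x y)"
proof
  assume "g \<in> orth_group A" then show "\<forall>x y. form A (g *v x) (g *v y) = form A x y"
    by (simp add: orth_group_def form_mult)
next
  assume h: "\<forall>x y. form A (g *v x) (g *v y) = form A x y"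
  have "transpose g ** A ** g = A"
  proof (rule vec_eq_iff[THEN iffD2], intro allI, rule vec_eq_iff[THEN iffD2], intro allI)
    fix i j
    show "(transpose g ** A ** g) $ i $ j = A $ i $ j"
      using h[rule_format, of "axis i 1" "axis j 1"] by (simp add: form_mult form_axis)
  qed
  then show "g \<in> orth_group A" by (simp add: orth_group_def)
qed

lemma form_add1: "form A (x + y) z = form A x z + form A y z"
  unfolding form_def by (simp add: algebra_simps sum.distrib)
lemma form_add2: "form A x (y + z) = form A x y + form A x z"
  unfolding form_def by (simp add: algebra_simps sum.distrib)
lemma form_diff1: "form A (x - y) z = form A x z - form A y z"
  unfolding form_def by (simp add: algebra_simps sum_subtractf)
lemma form_diff2: "form A x (y - z) = form A x y - form A x z"
  unfolding form_def by (simp add: algebra_simps sum_subtractf)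
lemma form_neg1: "form A (- x) z = - form A x z"
  unfolding form_def by (simp add: sum_negf)
lemma form_neg2: "form A x (- z) = - form A x z"
  unfolding form_def by (simp add: sum_negf)
lemma form_scale1: "form A (c *s x) z = c * form A x z"
  unfolding form_def by (simp add: sum_distrib_left mult.assoc)
lemma form_scale2: "form A x (c *s z) = c * form A x z"
  unfolding form_def by (simp add: sum_distrib_left algebra_simps)
lemmas form_lin = form_add1 form_add2 form_diff1 form_diff2 form_neg1 form_neg2 form_scale1 form_scale2

definition mk :: "'a^'n::finite \<Rightarrow> 'a^'n \<Rightarrow> 'a^('n+'n)" where
  "mk a b = (\<chi> k. case k of Inl i \<Rightarrow> a$i | Inr i \<Rightarrow> b$i)"
definition vtop :: "'a^('n::finite+'n) \<Rightarrow> 'a^'n" where "vtop x = (\<chi> i. x$Inl i)"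
definition vbot :: "'a^('n::finite+'n) \<Rightarrow> 'a^'n" where "vbot x = (\<chi> i. x$Inr i)"

lemma top_mk[simp]: "vtop (mk a b) = a" by (simp add: vtop_def mk_def)
lemma bot_mk[simp]: "vbot (mk a b) = b" by (simp add: vbot_def mk_def)
lemma mk_top_bot[simp]: "mk (vtop x) (vbot x) = x"
  by (simp add: vec_eq_iff mk_def vtop_def vbot_def split: sum.split)
lemma mk_eq_iff: "mk a b = mk c d \<longleftrightarrow> a = c \<and> b = d"
  by (metis top_mk bot_mk)
lemma mk_add: "mk a b + mk c d = mk (a + c) (b + d)"
  by (simp add: vec_eq_iff mk_def split: sum.split)
lemma mk_diff: "mk a b - mk c d = mk (a - c) (b - d)"
  by (simp add: vec_eq_iff mk_def split: sum.split)
lemma mk_neg: "- mk a b = mk (- a) (- b)"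
  by (simp add: vec_eq_iff mk_def split: sum.split)
lemma mk_scale: "c *s mk a b = mk (c *s a) (c *s b)"
  by (simp add: vec_eq_iff mk_def split: sum.split)
lemma mk_zero: "mk 0 0 = 0"
  by (simp add: vec_eq_iff mk_def split: sum.split)
lemma diag_emb_mk: "diag_emb v = mk v v"
  by (simp add: vec_eq_iff mk_def diag_emb_def split: sum.split)
lemma V_Delta_iff: "x \<in> V_Delta \<longleftrightarrow> vtop x = vbot x"
proof
  assume "x \<in> V_Delta" then obtain v where "x = diag_emb v" by (auto simp: V_Delta_def)
  then show "vtop x = vbot x" by (simp add: diag_emb_mk)
next
  assume "vtop x = vbot x"
  then have "x = diag_emb (vtop x)" by (metis mk_top_bot diag_emb_mk)
  then show "x \<in> V_Delta" by (auto simp: V_Delta_def)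
qed
lemma mk_in_Delta: "mk a b \<in> V_Delta \<longleftrightarrow> a = b" by (simp add: V_Delta_iff)

lemma sum_UNIV_plus: "(\<Sum>k\<in>(UNIV::('n::finite+'n) set). f k) = (\<Sum>i\<in>UNIV. f (Inl i)) + (\<Sum>i\<in>UNIV. f (Inr i))"
proof -
  have "(UNIV::('n+'n) set) = UNIV <+> UNIV" by simp
  then have "sum f UNIV = sum f (UNIV <+> UNIV)" by simp
  also have "\<dots> = sum (f \<circ> Inl) UNIV + sum (f \<circ> Inr) UNIV" by (rule sum.Plus) simp_all
  finally show ?thesis by (simp add: o_def)
qed

lemma iota_mv: "iota g1 g2 *v mk a b = mk (g1 *v a) (g2 *v b)"
  by (simp add: vec_eq_iff iota_def mk_def matrix_vector_mult_def sum_UNIV_plus split: sum.split)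

lemma wV_mv: "(w_V :: 'a::field^('n::finite+'n)^('n+'n)) *v mk a b = mk a (- b)"
proof -
  have "(mat (-1) :: 'a^'n^'n) *v b = - b"
    by (simp add: vec_eq_iff matrix_vector_mult_def mat_def if_distrib if_distribR cong: if_cong)
  then show ?thesis by (simp add: w_V_def iota_mv)
qed

lemma form_dbl: "form (dbl_form B) x y = form B (vtop x) (vtop y) - form B (vbot x) (vbot y)"
  by (simp add: form_def dbl_form_def sum_UNIV_plus vtop_def vbot_def sum_negf sum_subtractf)


lemma two_nz_aux:
  fixes S :: "'a set"
  shows "finite S \<Longrightarrow> (\<forall>x\<in>S. f x \<in> S \<and> f x \<noteq> x \<and> f (f x) = x) \<Longrightarrow> even (card S)"
proof (induction "card S" arbitrary: S rule: less_induct)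
  case less
  show ?case
  proof (cases "S = {}")
    case True then show ?thesis by simp
  next
    case False
    then obtain x where x: "x \<in> S" by blast
    let ?S = "S - {x, f x}"
    have fx: "f x \<in> S" "f x \<noteq> x" using less.prems x by auto
    have c: "card S = card ?S + 2"
    proof -
      have "card ?S = card S - card {x, f x}" using less.prems x fx by (subst card_Diff_subset) auto
      moreover have "card {x, f x} = 2" using fx by simp
      moreover have "card S \<ge> 2" using less.prems x fx
        by (metis \<open>card {x, f x} = 2\<close> card_mono empty_subsetI insert_subset)
      ultimately show ?thesis by simp
    qed
    have "even (card ?S)"
    proof (rule less.hyps)
      show "card ?S < card S" using c by simp
      show "finite ?S" using less.prems by simp
      show "\<forall>y\<in>?S. f y \<in> ?S \<and> f y \<noteq> y \<and> f (f y) = y"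
        using less.prems(2) x by auto metis+
    qed
    then show ?thesis using c by simp
  qed
qed

lemma two_nz:
  assumes "odd CARD('a::{finite,field})"
  shows "(2::'a) \<noteq> 0"
proof
  assume h: "(2::'a) = 0"
  have "even (card (UNIV::'a set))"
  proof (rule two_nz_aux[where f = "\<lambda>x. x + 1"])
    show "finite (UNIV::'a set)" by simp
    have "(1::'a) + 1 = 0" using h by (simp add: one_add_one)
    then show "\<forall>x\<in>UNIV. (x::'a) + 1 \<in> UNIV \<and> x + 1 \<noteq> x \<and> x + 1 + 1 = x"
      by (simp add: add.assoc)
  qed
  then show False using assms by simp
qed

lemma mat_neg_mv: "(mat (-1) :: 'a::ring_1^'n::finite^'n) *v x = - x"
  by (simp add: vec_eq_iff matrix_vector_mult_def mat_def if_distrib if_distribR cong: if_cong)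

lemma orth_mult: "a \<in> orth_group A \<Longrightarrow> b \<in> orth_group A \<Longrightarrow> a ** b \<in> orth_group A"
  by (simp add: orth_iff matrix_vector_mul_assoc[symmetric])

lemma orth_one: "mat 1 \<in> orth_group A"
  by (simp add: orth_iff)

lemma orth_neg: "(mat (-1) :: 'a::field^'n::finite^'n) \<in> orth_group A"
  by (simp add: orth_iff mat_neg_mv form_neg1 form_neg2)

lemma det_mat: "det (mat c :: 'a::comm_ring_1^'n::finite^'n) = c ^ CARD('n)"
  by (subst det_diagonal) (auto simp: mat_def)

lemma det_orth:
  assumes "g \<in> orth_group B" "det B \<noteq> 0"
  shows "det g = 1 \<or> det g = -1"
proof -
  have "det (transpose g ** B ** g) = det B" using assms by (simp add: orth_group_def)
  then have "det g * det g * det B = 1 * det B" by (simp add: det_mul)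
  then have "det g * det g = 1" using assms(2) by simp
  then show ?thesis by (metis square_eq_1_iff power2_eq_square) 
qed

lemma orth_inv:
  assumes "g \<in> orth_group B" "det B \<noteq> 0"
  obtains h where "h \<in> orth_group B" "g ** h = mat 1" "h ** g = mat 1"
proof -
  have "det g \<noteq> 0" using det_orth[OF assms] by auto
  then have "invertible g" by (simp add: invertible_det_nz)
  then obtain h where h: "g ** h = mat 1" "h ** g = mat 1" unfolding invertible_def by blast
  have "h \<in> orth_group B"
    unfolding orth_iff
  proof (intro allI)
    fix x y
    have "form B (h *v x) (h *v y) = form B (g *v (h *v x)) (g *v (h *v y))"
      using assms(1) by (simp add: orth_iff)
    also have "\<dots> = form B x y" by (simp add: matrix_vector_mul_assoc h)
    finally show "form B (h *v x) (h *v y) = form B x y" .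
  qed
  then show ?thesis using h that by blast
qed

lemma det_neg_mat: "det (- (A :: 'a::comm_ring_1^'n::finite^'n)) = (-1) ^ CARD('n) * det A"
proof -
  have "- A = mat (-1) ** A" by (simp add: matrix_eq matrix_vector_mul_assoc[symmetric] mat_neg_mv)
      (simp add: vec_eq_iff matrix_vector_mult_def sum_negf)
  then show ?thesis by (simp add: det_mul det_mat)
qed

lemma det_one_minus:
  assumes "g \<in> orth_group B" "det B \<noteq> 0"
  shows "det (mat 1 - g) = (-1) ^ CARD('n) * det g * det (mat 1 - (g::'a::field^'n::finite^'n))"
proof -
  have gB: "transpose g ** B ** g = B" using assms by (simp add: orth_group_def)
  have "transpose (mat 1 - g) ** B = transpose g ** B ** (g - mat 1)"
  proof -
    have "transpose (mat 1 - g) = mat 1 - transpose g"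
      by (simp add: vec_eq_iff transpose_def mat_def)
    then have "transpose (mat 1 - g) ** B = B - transpose g ** B"
      by (simp add: matrix_eq matrix_vector_mul_assoc[symmetric] matrix_vector_mult_diff_rdistrib)
    also have "\<dots> = transpose g ** B ** (g - mat 1)"
      using gB by (simp add: matrix_eq matrix_vector_mul_assoc[symmetric] matrix_vector_mult_diff_rdistrib matrix_vector_mult_diff_distrib)
    finally show ?thesis .
  qed
  then have "det (mat 1 - g) * det B = det g * det B * det (g - mat 1)"
    by (metis det_mul det_transpose)
  moreover have "det (g - mat 1) = (-1) ^ CARD('n) * det (mat 1 - g)"
    using det_neg_mat[of "mat 1 - g"] by (simp only: minus_diff_eq)
  ultimately have e: "det (mat 1 - g) * det B = det g * det B * ((-1) ^ CARD('n) * det (mat 1 - g))"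
    by (simp only:)
  from e assms(2) show ?thesis by (metis (no_types, lifting) mult.commute mult.left_commute mult_cancel_right)
qed


lemma top_add: "vtop (x + y) = vtop x + vtop y" by (simp add: vtop_def vec_eq_iff)
lemma bot_add: "vbot (x + y) = vbot x + vbot y" by (simp add: vbot_def vec_eq_iff)
lemma top_diff: "vtop (x - y) = vtop x - vtop y" by (simp add: vtop_def vec_eq_iff)
lemma bot_diff: "vbot (x - y) = vbot x - vbot y" by (simp add: vbot_def vec_eq_iff)

lemma mat_mv: "(mat c :: 'a::comm_ring_1^'n::finite^'n) *v x = c *s x"
  by (simp add: vec_eq_iff matrix_vector_mult_def mat_def if_distrib if_distribR cong: if_cong)

lemma mv_axis: "((M::'a::comm_ring_1^'n::finite^'m) *v axis j 1) $ i = M$i$j"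
proof -
  have "\<And>k. M$i$k * (axis j 1)$k = (if k = j then M$i$k else 0)" by (simp add: axis_def)
  then show ?thesis by (simp add: matrix_vector_mult_def sum.delta')
qed

lemma mv3: "(a ** b ** c) *v y = a *v (b *v (c *v y))"
  by (simp add: matrix_vector_mul_assoc matrix_mul_assoc)

lemma iota_mv': "iota g1 g2 *v x = mk (g1 *v vtop x) (g2 *v vbot x)"
  by (metis iota_mv mk_top_bot)

lemma iota_orth:
  assumes "g \<in> orth_group B" "h \<in> orth_group B"
  shows "iota g h \<in> orth_group (dbl_form B)"
  using assms by (simp add: orth_iff iota_mv' form_dbl)

lemma wV_orth: "(w_V :: 'a::field^('n::finite+'n)^('n+'n)) \<in> orth_group (dbl_form B)"
proof -
  have "(w_V :: 'a::field^('n::finite+'n)^('n+'n)) *v x = mk (vtop x) (- vbot x)" for x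
    by (metis wV_mv mk_top_bot)
  then show ?thesis by (simp add: orth_iff form_dbl form_neg1 form_neg2)
qed

lemma N_props:
  assumes "u \<in> N_V B"
  shows "u \<in> orth_group (dbl_form B)" "u *v mk v v = mk v v"
    "vtop (u *v y) - vtop y = vbot (u *v y) - vbot y"
proof -
  show "u \<in> orth_group (dbl_form B)" using assms by (simp add: N_V_def P_V_def)
  show "u *v mk v v = mk v v" using assms by (simp add: N_V_def diag_emb_mk)
  have "u *v y - y \<in> V_Delta" using assms by (simp add: N_V_def)
  then show "vtop (u *v y) - vtop y = vbot (u *v y) - vbot y" by (simp add: V_Delta_iff top_diff bot_diff)
qed

lemma P_iff:
  assumes "p \<in> orth_group (dbl_form B)"
  shows "p \<in> P_V B \<longleftrightarrow> (\<forall>v. vtop (p *v mk v v) = vbot (p *v mk v v))"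
  using assms by (simp add: P_V_def diag_emb_mk V_Delta_iff)

lemma xu_orth:
  assumes "g \<in> orth_group B" "u \<in> N_V B"
  shows "w_V ** u ** iota g (mat 1) \<in> orth_group (dbl_form B)"
  by (intro orth_mult wV_orth N_props(1)[OF assms(2)] iota_orth assms(1) orth_one)

context
  fixes B :: "'f::{finite,field}^'n::finite^'n" and g :: "'f^'n^'n"
  assumes odd: "odd CARD('f)" and gO: "g \<in> orth_group B"
begin

lemma two: "(2::'f) \<noteq> 0" using two_nz[OF odd] .

lemma valid_fixed:
  assumes u: "u \<in> N_V B" and P: "w_V ** u ** iota g (mat 1) \<in> P_V B" and gv: "g *v v = v"
  shows "v = 0"
proof -
  have e: "(w_V ** u ** iota g (mat 1)) *v mk v v = mk v (- v)"
    by (simp add: mv3 iota_mv gv N_props(2)[OF u] wV_mv)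
  have "vtop ((w_V ** u ** iota g (mat 1)) *v mk v v) = vbot ((w_V ** u ** iota g (mat 1)) *v mk v v)"
    using P_iff[OF xu_orth[OF gO u]] P by blast
  then have "v = - v" unfolding e by (simp only: top_mk bot_mk)
  then have "v + v = v + - v" by (rule arg_cong[where f="\<lambda>x. v + x"])
  then have "v + v = 0" by simp
  then have "\<And>i. v$i + v$i = 0" by (metis vector_add_component zero_index)
  then have "\<And>i. 2 * v$i = 0" by (simp only: mult_2)
  then show "v = 0" using two by (simp add: vec_eq_iff)
qed

definition hh :: "'f^'n \<Rightarrow> 'f^'n" where "hh v = inverse 2 *s (g *v v - v)"

lemma valid_char:
  assumes u: "u \<in> N_V B" and P: "w_V ** u ** iota g (mat 1) \<in> P_V B"
  shows "u *v mk (g *v v) v = mk (hh v) (- hh v)"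
    "(w_V ** u ** iota g (mat 1)) *v mk v v = mk (hh v) (hh v)"
proof -
  define z where "z = u *v mk (g *v v) v"
  have x: "(w_V ** u ** iota g (mat 1)) *v mk v v = mk (vtop z) (- vbot z)"
    by (simp add: mv3 iota_mv z_def) (metis wV_mv mk_top_bot)
  have "vtop ((w_V ** u ** iota g (mat 1)) *v mk v v) = vbot ((w_V ** u ** iota g (mat 1)) *v mk v v)"
    using P_iff[OF xu_orth[OF gO u]] P by blast
  then have e1: "vtop z = - vbot z" unfolding x by (simp only: top_mk bot_mk)
  have e2: "vtop z - g *v v = vbot z - v" using N_props(3)[OF u, of "mk (g *v v) v"] by (simp add: z_def)
  have tz: "vtop z = hh v"
    unfolding hh_def vec_eq_iff
  proof
    fix i
    have a: "vtop z $ i = - vbot z $ i" using e1 by (simp add: vec_eq_iff)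
    have b: "vtop z $ i - (g *v v) $ i = vbot z $ i - v $ i" using e2 by (simp add: vec_eq_iff)
    from a b two show "vtop z $ i = (inverse 2 *s (g *v v - v)) $ i"
      by (simp add: field_simps)
  qed
  have bz: "vbot z = - hh v" using e1 tz by simp
  show "u *v mk (g *v v) v = mk (hh v) (- hh v)" by (metis z_def tz bz mk_top_bot)
  show "(w_V ** u ** iota g (mat 1)) *v mk v v = mk (hh v) (hh v)" using x tz bz by simp
qed

end


definition Em :: "'a::comm_ring_1^'n::finite^('n+'n)" where
  "Em = (\<chi> a j. (mat 1 :: 'a^'n^'n) $ (case_sum id id a) $ j)"
definition Pm :: "'a::comm_ring_1^('n::finite+'n)^'n" where
  "Pm = (\<chi> i b. case b of Inl j \<Rightarrow> (mat 1 :: 'a^'n^'n)$i$j | Inr j \<Rightarrow> - ((mat 1 :: 'a^'n^'n)$i$j))"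

lemma Em_mv: "(Em :: 'a::comm_ring_1^'n::finite^('n+'n)) *v v = mk v v"
proof -
  have "\<And>a k. (mat 1 :: 'a^'n^'n) $ (case_sum id id a) $ k * v$k = (if k = case_sum id id a then v$k else 0)"
    by (simp add: mat_def)
  then show ?thesis
    by (simp add: vec_eq_iff Em_def matrix_vector_mult_def sum.delta' mk_def split: sum.split)
qed

lemma Pm_mv: "(Pm :: 'a::comm_ring_1^('n::finite+'n)^'n) *v y = vtop y - vbot y"
proof -
  have "\<And>i k. (mat 1 :: 'a^'n^'n)$i$k * y$Inl k = (if k = i then y$Inl k else 0)"
    "\<And>i k. (mat 1 :: 'a^'n^'n)$i$k * y$Inr k = (if k = i then y$Inr k else 0)"
    by (auto simp add: mat_def)
  then show ?thesis
    by (simp add: vec_eq_iff Pm_def matrix_vector_mult_def sum_UNIV_plus sum.delta' vtop_def vbot_def sum_negf)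
qed

context
  fixes B :: "'f::{finite,field}^'n::finite^'n" and g :: "'f^'n^'n"
  assumes odd: "odd CARD('f)" and gO: "g \<in> orth_group B" and dg: "det (mat 1 - g) \<noteq> 0"
begin

lemma Gi_ex: obtains Gi where "Gi ** (g - mat 1) = mat 1" "(g - mat 1) ** Gi = mat 1"
proof -
  have "det (g - mat 1) = (-1) ^ CARD('n) * det (mat 1 - g)"
    using det_neg_mat[of "mat 1 - g"] by (simp only: minus_diff_eq)
  then have "det (g - mat 1) \<noteq> 0" using dg by simp
  then have "invertible (g - mat 1)" by (simp add: invertible_det_nz)
  then show ?thesis using that unfolding invertible_def by blast
qed

lemma valid_unique:
  assumes u: "u \<in> N_V B" and P: "w_V ** u ** iota g (mat 1) \<in> P_V B"
    and u': "u' \<in> N_V B" and P': "w_V ** u' ** iota g (mat 1) \<in> P_V B"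
  shows "u = u'"
proof -
  obtain Gi where Gi: "Gi ** (g - mat 1) = mat 1" "(g - mat 1) ** Gi = mat 1" using Gi_ex by blast
  show ?thesis unfolding matrix_eq
  proof
    fix y :: "'f^('n+'n)"
    define v where "v = Gi *v (vtop y - vbot y)"
    define c where "c = vbot y - v"
    have gv: "g *v v - v = vtop y - vbot y"
      using Gi(2) unfolding v_def by (metis matrix_vector_mul_assoc matrix_vector_mul_lid matrix_vector_mult_diff_rdistrib)
    have y: "y = mk (g *v v) v + mk c c"
    proof -
      have "g *v v + c = vtop y" using gv unfolding c_def by (simp add: algebra_simps)
      moreover have "v + c = vbot y" unfolding c_def by simp
      ultimately show ?thesis by (simp add: mk_add)
    qed
    have "u *v y = mk (hh g v) (- hh g v) + mk c c"
      by (subst y) (simp add: matrix_vector_right_distrib valid_char[OF odd gO u P] N_props(2)[OF u])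
    moreover have "u' *v y = mk (hh g v) (- hh g v) + mk c c"
      by (subst y) (simp add: matrix_vector_right_distrib valid_char[OF odd gO u' P'] N_props(2)[OF u'])
    ultimately show "u *v y = u' *v y" by simp
  qed
qed


definition SS :: "'f^'n^'n" where
  "SS = mat (- inverse 2) ** (g + mat 1) ** (SOME Gi. Gi ** (g - mat 1) = mat 1 \<and> (g - mat 1) ** Gi = mat 1)"

lemma Gi_some: "(SOME Gi. Gi ** (g - mat 1) = mat 1 \<and> (g - mat 1) ** Gi = mat 1) ** (g - mat 1) = mat 1"
  "(g - mat 1) ** (SOME Gi. Gi ** (g - mat 1) = mat 1 \<and> (g - mat 1) ** Gi = mat 1) = mat 1"
proof -
  obtain Gi where "Gi ** (g - mat 1) = mat 1" "(g - mat 1) ** Gi = mat 1" using Gi_ex by blast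
  then have "\<exists>Gi. Gi ** (g - mat 1) = mat 1 \<and> (g - mat 1) ** Gi = mat 1" by blast
  note someI_ex[OF this]
  then show "(SOME Gi. Gi ** (g - mat 1) = mat 1 \<and> (g - mat 1) ** Gi = mat 1) ** (g - mat 1) = mat 1"
    "(g - mat 1) ** (SOME Gi. Gi ** (g - mat 1) = mat 1 \<and> (g - mat 1) ** Gi = mat 1) = mat 1"
    by (rule conjunct1, rule conjunct2)
qed

lemma SS_prop: "SS *v ((g - mat 1) *v a) = (- inverse 2) *s (g *v a + a)"
proof -
  have "SS ** (g - mat 1) = mat (- inverse 2) ** (g + mat 1)"
    unfolding SS_def by (simp only: matrix_mul_assoc[symmetric] Gi_some(1) matrix_mul_rid)
  then have "SS *v ((g - mat 1) *v a) = mat (- inverse 2) *v ((g + mat 1) *v a)"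
    by (simp only: matrix_vector_mul_assoc)
  then show ?thesis by (simp only: mat_mv matrix_vector_mult_add_rdistrib vector_smult_lid)
qed

lemma surj_gm: "(g - mat 1) *v ((SOME Gi. Gi ** (g - mat 1) = mat 1 \<and> (g - mat 1) ** Gi = mat 1) *v a) = a"
  by (simp add: matrix_vector_mul_assoc Gi_some(2))

lemma SS_lie: "form B (SS *v a) b + form B a (SS *v b) = 0"
proof -
  define Gi where "Gi = (SOME Gi. Gi ** (g - mat 1) = mat 1 \<and> (g - mat 1) ** Gi = mat 1)"
  define a' where "a' = Gi *v a"
  define b' where "b' = Gi *v b"
  have a: "a = g *v a' - a'" using surj_gm[of a] unfolding a'_def Gi_def by (simp add: matrix_vector_mult_diff_rdistrib)
  have b: "b = g *v b' - b'" using surj_gm[of b] unfolding b'_def Gi_def by (simp add: matrix_vector_mult_diff_rdistrib)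
  have Sa: "SS *v a = (- inverse 2) *s (g *v a' + a')"
    using SS_prop[of a'] surj_gm[of a] unfolding a'_def Gi_def by simp
  have Sb: "SS *v b = (- inverse 2) *s (g *v b' + b')"
    using SS_prop[of b'] surj_gm[of b] unfolding b'_def Gi_def by simp
  have o: "form B (g *v a') (g *v b') = form B a' b'" using gO by (simp add: orth_iff)
  show ?thesis
    apply (simp only: Sa Sb)
    apply (subst b)
    apply (subst a)
    apply (simp only: form_lin o)
    apply (simp add: algebra_simps)
    done
qed

definition u0 :: "'f^('n+'n)^('n+'n)" where "u0 = mat 1 + Em ** SS ** Pm"

lemma u0_mv: "u0 *v y = y + mk (SS *v (vtop y - vbot y)) (SS *v (vtop y - vbot y))"
  by (simp add: u0_def matrix_vector_mult_add_rdistrib mv3 Pm_mv Em_mv)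

lemma u0_N: "u0 \<in> N_V B"
proof -
  have orth: "u0 \<in> orth_group (dbl_form B)"
    unfolding orth_iff
  proof (intro allI)
    fix x y :: "'f^('n+'n)"
    have l: "form B (SS *v (vtop x - vbot x)) (vtop y - vbot y) + form B (vtop x - vbot x) (SS *v (vtop y - vbot y)) = 0"
      by (rule SS_lie)
    show "form (dbl_form B) (u0 *v x) (u0 *v y) = form (dbl_form B) x y"
      using l by (simp add: u0_mv form_dbl top_add bot_add form_lin algebra_simps)
  qed
  have hfix: "u0 *v mk v v = mk v v" for v
    by (simp add: u0_mv mk_zero)
  have P: "u0 \<in> P_V B" using orth hfix by (simp add: P_iff)
  show ?thesis
    unfolding N_V_def using P hfix
    by (simp add: diag_emb_mk u0_mv V_Delta_iff)
qed

lemma u0_valid: "w_V ** u0 ** iota g (mat 1) \<in> P_V B"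
proof -
  have "vtop ((w_V ** u0 ** iota g (mat 1)) *v mk v v) = vbot ((w_V ** u0 ** iota g (mat 1)) *v mk v v)" for v
  proof -
    have s: "SS *v (g *v v - v) = (- inverse 2) *s (g *v v + v)"
      using SS_prop[of v] by (simp add: matrix_vector_mult_diff_rdistrib)
    have "(w_V ** u0 ** iota g (mat 1)) *v mk v v = mk (g *v v + SS *v (g *v v - v)) (- (v + SS *v (g *v v - v)))"
      by (simp add: mv3 iota_mv u0_mv mk_add wV_mv)
    moreover have "g *v v + SS *v (g *v v - v) = - (v + SS *v (g *v v - v))"
      unfolding s vec_eq_iff
    proof
      fix i
      show "(g *v v + - inverse 2 *s (g *v v + v)) $ i = (- (v + - inverse 2 *s (g *v v + v))) $ i"
        using two_nz[OF odd] by (simp add: field_simps)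
    qed
    ultimately show ?thesis by simp
  qed
  then show ?thesis using xu_orth[OF gO u0_N] by (simp add: P_iff)
qed

end

lemma mk_Inl[simp]: "(mk a b) $ Inl i = a $ i" by (simp add: mk_def)
lemma mk_Inr[simp]: "(mk a b) $ Inr i = b $ i" by (simp add: mk_def)

lemma restr_val:
  fixes B :: "'f::{finite,field}^'n::finite^'n"
  assumes odd: "odd CARD('f)" and gO: "g \<in> orth_group B"
    and u: "u \<in> N_V B" and P: "w_V ** u ** iota g (mat 1) \<in> P_V B"
  shows "restr_Delta (w_V ** u ** iota g (mat 1)) = mat (inverse 2) ** (g - mat 1)"
proof -
  have "restr_Delta (w_V ** u ** iota g (mat 1)) $ i $ j = (mat (inverse 2) ** (g - mat 1)) $ i $ j" for i j
  proof -
    have "restr_Delta (w_V ** u ** iota g (mat 1)) $ i $ j = hh g (axis j 1) $ i"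
      by (simp add: restr_Delta_def diag_emb_mk valid_char(2)[OF odd gO u P])
    also have "\<dots> = ((mat (inverse 2) ** (g - mat 1)) *v axis j 1) $ i"
      by (simp only: matrix_vector_mul_assoc[symmetric] mat_mv matrix_vector_mult_diff_rdistrib vector_smult_lid) (simp add: hh_def[OF odd gO])
    also have "\<dots> = (mat (inverse 2) ** (g - mat 1)) $ i $ j" by (rule mv_axis)
    finally show ?thesis .
  qed
  then show ?thesis by (simp add: vec_eq_iff)
qed

lemma core_sum:
  fixes B :: "'f::{finite,field}^'n::finite^'n" and chi :: "'f \<Rightarrow> 'c::field"
  assumes odd: "odd CARD('f)" and gO: "g \<in> orth_group B"
  shows "(\<Sum>u\<in>N_V B. f0_V B chi (w_V ** u ** iota g (mat 1))) =
    (if det (mat 1 - g) = 0 then 0 else chi (det (mat (inverse 2) ** (g - mat 1))))"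
proof (cases "det (mat 1 - g) = 0")
  case True
  then have "\<not> invertible (mat 1 - g)" by (simp add: invertible_det_nz)
  then have "\<not> (\<exists>C. C ** (mat 1 - g) = mat 1)" by (simp add: invertible_left_inverse)
  then obtain v where v: "(mat 1 - g) *v v = 0" "v \<noteq> 0" unfolding matrix_left_invertible_ker by blast
  then have gv: "g *v v = v" by (simp add: matrix_vector_mult_diff_rdistrib)
  have "\<forall>u\<in>N_V B. w_V ** u ** iota g (mat 1) \<notin> P_V B"
    using valid_fixed[OF odd gO _ _ gv] v(2) by blast
  then show ?thesis using True by (simp add: f0_V_def)
next
  case False
  let ?f = "\<lambda>u. f0_V B chi (w_V ** u ** iota g (mat 1))"
  have u0N: "u0 g \<in> N_V B" by (rule u0_N[OF odd gO False])
  have u0P: "w_V ** u0 g ** iota g (mat 1) \<in> P_V B" by (rule u0_valid[OF odd gO False])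
  have z: "\<forall>u\<in>N_V B - {u0 g}. ?f u = 0"
  proof
    fix u assume "u \<in> N_V B - {u0 g}"
    then have "u \<in> N_V B" "u \<noteq> u0 g" by auto
    then have "w_V ** u ** iota g (mat 1) \<notin> P_V B"
      using valid_unique[OF odd gO False _ _ u0N u0P] by blast
    then show "?f u = 0" by (simp add: f0_V_def)
  qed
  have "(\<Sum>u\<in>N_V B. ?f u) = ?f (u0 g) + (\<Sum>u\<in>N_V B - {u0 g}. ?f u)"
    using u0N by (simp add: sum.remove)
  also have "\<dots> = ?f (u0 g)" using z by simp
  also have "\<dots> = chi (det (mat (inverse 2) ** (g - mat 1)))"
    using u0P by (simp add: f0_V_def det_Delta_def restr_val[OF odd gO u0N u0P])
  finally show ?thesis using False by simp
qed


definition fscale :: "'c::field \<Rightarrow> ('x \<Rightarrow> 'c) \<Rightarrow> ('x \<Rightarrow> 'c)" where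
  "fscale c f = (\<lambda>x. c * f x)"

interpretation fv: vector_space "fscale :: 'c::field \<Rightarrow> ('x \<Rightarrow> 'c) \<Rightarrow> ('x \<Rightarrow> 'c)"
  by unfold_locales (auto simp: fscale_def fun_eq_iff algebra_simps)

lemma sum_fun_apply: "(\<Sum>i\<in>A. f i) x = (\<Sum>i\<in>A. f i x)"
  by (induction A rule: infinite_finite_induct) auto

lemma csubspace_iff: "csubspace W \<longleftrightarrow> fv.subspace W"
  by (simp add: csubspace_def fv.subspace_def fscale_def zero_fun_def plus_fun_def)

definition linop :: "('x \<Rightarrow> 'c::field) set \<Rightarrow> (('x \<Rightarrow> 'c) \<Rightarrow> ('x \<Rightarrow> 'c)) \<Rightarrow> bool" where
  "linop W L \<longleftrightarrow> (\<forall>f\<in>W. L f \<in> W) \<and> (\<forall>f\<in>W. \<forall>h\<in>W. L (\<lambda>x. f x + h x) = (\<lambda>x. L f x + L h x))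
     \<and> (\<forall>c. \<forall>f\<in>W. L (\<lambda>x. c * f x) = (\<lambda>x. c * L f x))"

lemma linop_W: "linop W L \<Longrightarrow> f \<in> W \<Longrightarrow> L f \<in> W" by (simp add: linop_def)
lemma linop_add: "linop W L \<Longrightarrow> f \<in> W \<Longrightarrow> h \<in> W \<Longrightarrow> L (\<lambda>x. f x + h x) = (\<lambda>x. L f x + L h x)"
  by (simp add: linop_def)
lemma linop_scale: "linop W L \<Longrightarrow> f \<in> W \<Longrightarrow> L (\<lambda>x. c * f x) = (\<lambda>x. c * L f x)"
  by (simp add: linop_def)

lemma csub_zero: "csubspace W \<Longrightarrow> (\<lambda>_. 0) \<in> W" by (simp add: csubspace_def)
lemma csub_add: "csubspace W \<Longrightarrow> f \<in> W \<Longrightarrow> h \<in> W \<Longrightarrow> (\<lambda>x. f x + h x) \<in> W" by (simp add: csubspace_def)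
lemma csub_scale: "csubspace W \<Longrightarrow> f \<in> W \<Longrightarrow> (\<lambda>x. c * f x) \<in> W" by (simp add: csubspace_def)

lemma csub_sum:
  assumes "csubspace W" "finite A" "\<forall>i\<in>A. g i \<in> W"
  shows "(\<lambda>x. \<Sum>i\<in>A. c i * g i x) \<in> W"
  using assms(2,3)
proof (induction A rule: finite_induct)
  case empty then show ?case using csub_zero[OF assms(1)] by simp
next
  case (insert a A)
  have "(\<lambda>x. c a * g a x) \<in> W" using insert csub_scale[OF assms(1)] by auto
  moreover have "(\<lambda>x. \<Sum>i\<in>A. c i * g i x) \<in> W" using insert by auto
  ultimately show ?case using insert csub_add[OF assms(1)] by simp
qed

lemma linop_zero: "linop W L \<Longrightarrow> csubspace W \<Longrightarrow> L (\<lambda>_. 0) = (\<lambda>_. 0)"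
proof -
  assume l: "linop W L" and c: "csubspace W"
  have z: "(\<lambda>_. 0) \<in> W" using c by (rule csub_zero)
  have sc: "\<forall>c. \<forall>f\<in>W. L (\<lambda>x. c * f x) = (\<lambda>x. c * L f x)" using l by (simp add: linop_def)
  have "L (\<lambda>x. 0 * (\<lambda>_. 0) x) = (\<lambda>x. 0 * L (\<lambda>_. 0) x)" using bspec[OF spec[OF sc, of 0] z] .
  then show ?thesis by simp
qed

lemma linop_sum:
  assumes l: "linop W L" and c: "csubspace W" and A: "finite A" and g: "\<forall>i\<in>A. g i \<in> W"
  shows "L (\<lambda>x. \<Sum>i\<in>A. k i * g i x) = (\<lambda>x. \<Sum>i\<in>A. k i * L (g i) x)"
  using A g
proof (induction A rule: finite_induct)
  case empty then show ?case using linop_zero[OF l c] by simp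
next
  case (insert a A)
  have a: "(\<lambda>x. k a * g a x) \<in> W" using insert csub_scale[OF c] by auto
  have r: "(\<lambda>x. \<Sum>i\<in>A. k i * g i x) \<in> W" using insert csub_sum[OF c] by auto
  have "L (\<lambda>x. \<Sum>i\<in>insert a A. k i * g i x) = L (\<lambda>x. (\<lambda>x. k a * g a x) x + (\<lambda>x. \<Sum>i\<in>A. k i * g i x) x)"
    using insert by simp
  also have "\<dots> = (\<lambda>x. L (\<lambda>x. k a * g a x) x + L (\<lambda>x. \<Sum>i\<in>A. k i * g i x) x)"
    by (rule linop_add[OF l a r])
  also have "L (\<lambda>x. k a * g a x) = (\<lambda>x. k a * L (g a) x)" using insert by (intro linop_scale[OF l]) auto
  finally show ?case using insert by simp
qed

lemma linop_comp: "linop W L \<Longrightarrow> linop W M \<Longrightarrow> linop W (L \<circ> M)"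
  unfolding linop_def by auto

lemma linop_id: "linop W id" unfolding linop_def by auto

lemma linop_pow: "linop W L \<Longrightarrow> linop W (L ^^ n)"
  by (induction n) (auto simp: linop_id linop_comp)

lemma rep_linop: "is_rep G W \<rho> \<Longrightarrow> g \<in> G \<Longrightarrow> linop W (\<rho> g)"
  unfolding is_rep_def linop_def by blast


locale schur_ctx =
  fixes G :: "('f::field^'n::finite^'n) set" and W :: "('x \<Rightarrow> 'c::field) set"
    and \<rho> :: "'f^'n^'n \<Rightarrow> ('x \<Rightarrow> 'c) \<Rightarrow> ('x \<Rightarrow> 'c)" and T :: "('x \<Rightarrow> 'c) \<Rightarrow> ('x \<Rightarrow> 'c)"
  assumes irr: "irred_rep G W \<rho>" and finG: "finite G" and closed: "\<forall>g\<in>G. \<forall>h\<in>G. g ** h \<in> G"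
    and Tlin: "linop W T" and Tcomm: "\<forall>g\<in>G. \<forall>f\<in>W. T (\<rho> g f) = \<rho> g (T f)"
    and alg: "\<forall>p :: 'c poly. 0 < degree p \<longrightarrow> (\<exists>z. poly p z = 0)"
begin

lemma rep: "is_rep G W \<rho>" using irr by (simp add: irred_rep_def)
lemma csW: "csubspace W" using rep by (simp add: is_rep_def)
lemma rho_lin: "g \<in> G \<Longrightarrow> linop W (\<rho> g)" using rep by (rule rep_linop)
lemma rho_mult: "g \<in> G \<Longrightarrow> h \<in> G \<Longrightarrow> f \<in> W \<Longrightarrow> \<rho> (g ** h) f = \<rho> g (\<rho> h f)"
  using rep by (simp add: is_rep_def)

lemma Wnz: obtains f0 where "f0 \<in> W" "f0 \<noteq> (\<lambda>_. 0)"
proof -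
  have "W \<noteq> {\<lambda>_. 0}" using irr by (simp add: irred_rep_def)
  moreover have "(\<lambda>_. 0) \<in> W" using csW by (rule csub_zero)
  ultimately obtain f0 where "f0 \<in> W" "f0 \<noteq> (\<lambda>_. 0)" by blast
  then show ?thesis using that by blast
qed

lemma inv_sub_eq:
  assumes "csubspace U" "U \<subseteq> W" "\<forall>g\<in>G. \<forall>f\<in>U. \<rho> g f \<in> U" "f \<in> U" "f \<noteq> (\<lambda>_. 0)"
  shows "U = W"
  using irr assms unfolding irred_rep_def by blast

lemma Tpow_lin: "linop W (T ^^ i)" by (rule linop_pow[OF Tlin])

lemma Tpow_comm: "g \<in> G \<Longrightarrow> f \<in> W \<Longrightarrow> (T ^^ i) (\<rho> g f) = \<rho> g ((T ^^ i) f)"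
proof (induction i)
  case 0 then show ?case by simp
next
  case (Suc i)
  have "(T ^^ i) f \<in> W" using Suc linop_W[OF Tpow_lin] by blast
  then show ?case using Suc Tcomm by simp
qed

definition peval :: "'c poly \<Rightarrow> ('x \<Rightarrow> 'c) \<Rightarrow> ('x \<Rightarrow> 'c)" where
  "peval p f = (\<lambda>x. \<Sum>i\<le>degree p. coeff p i * (T ^^ i) f x)"

lemma peval_bound:
  assumes "degree p \<le> N"
  shows "peval p f = (\<lambda>x. \<Sum>i\<le>N. coeff p i * (T ^^ i) f x)"
proof -
  have "(\<Sum>i\<le>N. coeff p i * (T ^^ i) f x) = (\<Sum>i\<le>degree p. coeff p i * (T ^^ i) f x)" for x
    by (rule sum.mono_neutral_right) (use assms in \<open>auto simp: coeff_eq_0\<close>)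
  then show ?thesis by (simp add: peval_def)
qed

lemma peval_W: "f \<in> W \<Longrightarrow> peval p f \<in> W"
  unfolding peval_def by (rule csub_sum[OF csW]) (auto intro: linop_W[OF Tpow_lin])

lemma peval_lin: "linop W (peval p)"
  unfolding linop_def
proof (intro conjI ballI allI)
  fix f assume "f \<in> W" then show "peval p f \<in> W" by (rule peval_W)
next
  fix f h assume f: "f \<in> W" and h: "h \<in> W"
  have "(T ^^ i) (\<lambda>x. f x + h x) = (\<lambda>x. (T ^^ i) f x + (T ^^ i) h x)" for i
    by (rule linop_add[OF Tpow_lin f h])
  then show "peval p (\<lambda>x. f x + h x) = (\<lambda>x. peval p f x + peval p h x)"
    by (simp add: peval_def distrib_left sum.distrib)
next
  fix c f assume f: "f \<in> W"
  have "(T ^^ i) (\<lambda>x. c * f x) = (\<lambda>x. c * (T ^^ i) f x)" for i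
    by (rule linop_scale[OF Tpow_lin f])
  then show "peval p (\<lambda>x. c * f x) = (\<lambda>x. c * peval p f x)"
    by (simp add: peval_def sum_distrib_left mult.left_commute)
qed

lemma peval_comm:
  assumes g: "g \<in> G" and f: "f \<in> W"
  shows "peval p (\<rho> g f) = \<rho> g (peval p f)"
proof -
  have "\<rho> g (peval p f) = (\<lambda>x. \<Sum>i\<le>degree p. coeff p i * \<rho> g ((T ^^ i) f) x)"
    unfolding peval_def
    by (rule linop_sum[OF rho_lin[OF g] csW]) (auto intro: linop_W[OF Tpow_lin] f)
  then show ?thesis by (simp add: peval_def Tpow_comm[OF g f])
qed

lemma peval_factor:
  assumes f: "f \<in> W"
  shows "peval ([:-a, 1:] * r) f = (\<lambda>x. T (peval r f) x - a * peval r f x)"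
proof -
  let ?N = "degree r"
  have deg: "degree ([:-a, 1:] * r) \<le> Suc ?N"
    using degree_mult_le[of "[:-a, 1:]" r] by simp
  have pe: "[:-a, 1:] * r = smult (-a) r + pCons 0 r" by simp
  have co: "coeff ([:-a, 1:] * r) i = coeff (pCons 0 r) i - a * coeff r i" for i
    by (simp add: pe)
  have s1: "(\<Sum>i\<le>Suc ?N. coeff (pCons 0 r) i * (T ^^ i) f x) = T (peval r f) x" for x
  proof -
    have "(\<Sum>i\<le>Suc ?N. coeff (pCons 0 r) i * (T ^^ i) f x) = (\<Sum>i\<le>?N. coeff r i * T ((T ^^ i) f) x)"
      by (subst sum.atMost_Suc_shift) simp
    also have "\<dots> = T (peval r f) x"
    proof -
      have "T (peval r f) = (\<lambda>x. \<Sum>i\<le>?N. coeff r i * T ((T ^^ i) f) x)"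
        unfolding peval_def
        by (rule linop_sum[OF Tlin csW]) (auto intro: linop_W[OF Tpow_lin] f)
      then show ?thesis by simp
    qed
    finally show ?thesis .
  qed
  have s2: "(\<Sum>i\<le>Suc ?N. coeff r i * (T ^^ i) f x) = peval r f x" for x
    using peval_bound[of r "Suc ?N" f] by simp
  have "peval ([:-a, 1:] * r) f = (\<lambda>x. \<Sum>i\<le>Suc ?N. (coeff (pCons 0 r) i - a * coeff r i) * (T ^^ i) f x)"
    using peval_bound[OF deg] co by simp
  also have "\<dots> = (\<lambda>x. (\<Sum>i\<le>Suc ?N. coeff (pCons 0 r) i * (T ^^ i) f x) - a * (\<Sum>i\<le>Suc ?N. coeff r i * (T ^^ i) f x))"
    by (simp del: sum.atMost_Suc add: left_diff_distrib sum_subtractf sum_distrib_left mult.assoc)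
  also have "\<dots> = (\<lambda>x. T (peval r f) x - a * peval r f x)" using s1 s2 by simp
  finally show ?thesis .
qed


lemma kernel_all:
  assumes L: "linop W L" and comm: "\<forall>g\<in>G. \<forall>f\<in>W. L (\<rho> g f) = \<rho> g (L f)"
    and f0: "f0 \<in> W" "f0 \<noteq> (\<lambda>_. 0)" and z: "L f0 = (\<lambda>x. c * f0 x)"
  shows "\<forall>f\<in>W. L f = (\<lambda>x. c * f x)"
proof -
  let ?K = "{f\<in>W. L f = (\<lambda>x. c * f x)}"
  have cs: "csubspace ?K"
    unfolding csubspace_def
  proof (intro conjI ballI allI)
    show "(\<lambda>_. 0) \<in> ?K" using csub_zero[OF csW] linop_zero[OF L csW] by simp
  next
    fix f h assume "f \<in> ?K" "h \<in> ?K"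
    then show "(\<lambda>x. f x + h x) \<in> ?K"
      using csub_add[OF csW] linop_add[OF L] by (simp add: distrib_left)
  next
    fix d f assume "f \<in> ?K"
    then show "(\<lambda>x. d * f x) \<in> ?K"
      using csub_scale[OF csW] linop_scale[OF L] by (simp add: mult.left_commute)
  qed
  have inv: "\<forall>g\<in>G. \<forall>f\<in>?K. \<rho> g f \<in> ?K"
  proof (intro ballI)
    fix g f assume g: "g \<in> G" and f: "f \<in> ?K"
    have "\<rho> g f \<in> W" using f linop_W[OF rho_lin[OF g]] by blast
    moreover have "L (\<rho> g f) = (\<lambda>x. c * \<rho> g f x)"
      using comm g f linop_scale[OF rho_lin[OF g], of f c] by simp
    ultimately show "\<rho> g f \<in> ?K" by simp
  qed
  have "?K = W" by (rule inv_sub_eq[OF cs _ inv _ f0(2)]) (use f0 z in auto)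
  then show ?thesis by blast
qed

lemma scalar_from_poly:
  "p \<noteq> 0 \<Longrightarrow> \<forall>f\<in>W. peval p f = (\<lambda>_. 0) \<Longrightarrow> \<exists>c. \<forall>f\<in>W. T f = (\<lambda>x. c * f x)"
proof (induction "degree p" arbitrary: p)
  case 0
  obtain f0 where f0: "f0 \<in> W" "f0 \<noteq> (\<lambda>_. 0)" using Wnz by blast
  have "peval p f0 = (\<lambda>x. coeff p 0 * f0 x)" using peval_bound[of p 0 f0] 0 by simp
  moreover have "coeff p 0 \<noteq> 0" using 0 by (metis leading_coeff_0_iff)
  ultimately have "f0 = (\<lambda>_. 0)" using 0 f0 by (auto simp: fun_eq_iff)
  then show ?case using f0 by blast
next
  case (Suc n)
  then have "0 < degree p" by simp
  then obtain a where "poly p a = 0" using alg by blast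
  then obtain r where pr: "p = [:-a, 1:] * r" by (metis poly_eq_0_iff_dvd dvd_def)
  have r0: "r \<noteq> 0" using Suc.prems pr by auto
  have d1: "degree ([:-a, 1:] * r) = degree [:-a, 1:] + degree r"
    by (rule degree_mult_eq) (use r0 in auto)
  have "degree [:-a, 1:] = 1" by simp
  then have dr: "degree r = n"
    using Suc.hyps(2) pr d1 by simp
  show ?case
  proof (cases "\<exists>f\<in>W. peval r f \<noteq> (\<lambda>_. 0)")
    case True
    then obtain f where f: "f \<in> W" "peval r f \<noteq> (\<lambda>_. 0)" by blast
    have "peval p f = (\<lambda>_. 0)" using Suc.prems f by blast
    then have "(\<lambda>x. T (peval r f) x - a * peval r f x) = (\<lambda>_. 0)"
      using peval_factor[OF f(1), of a r] pr by simp
    then have "T (peval r f) = (\<lambda>x. a * peval r f x)" by (simp add: fun_eq_iff)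
    then have "\<forall>h\<in>W. T h = (\<lambda>x. a * h x)"
      by (intro kernel_all[OF Tlin Tcomm _ f(2)] peval_W f(1))
    then show ?thesis by blast
  next
    case False
    then show ?thesis using Suc.hyps(1)[OF dr[symmetric] r0] by blast
  qed
qed

lemma peval_kernel:
  assumes f0: "f0 \<in> W" "f0 \<noteq> (\<lambda>_. 0)" and z: "peval p f0 = (\<lambda>_. 0)"
  shows "\<forall>f\<in>W. peval p f = (\<lambda>_. 0)"
proof -
  have "\<forall>f\<in>W. peval p f = (\<lambda>x. 0 * f x)"
    by (rule kernel_all[OF peval_lin _ f0]) (use peval_comm z in auto)
  then show ?thesis by simp
qed

lemma span_eq:
  assumes f0: "f0 \<in> W" "f0 \<noteq> (\<lambda>_. 0)"
  shows "fv.span (insert f0 ((\<lambda>h. \<rho> h f0) ` G)) = W"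
proof -
  let ?S = "insert f0 ((\<lambda>h. \<rho> h f0) ` G)"
  let ?U = "fv.span ?S"
  have SW: "?S \<subseteq> W" using f0 linop_W[OF rho_lin] by auto
  have UW: "?U \<subseteq> W" by (rule fv.span_minimal[OF SW]) (use csW csubspace_iff in blast)
  have csU: "csubspace ?U" using csubspace_iff fv.subspace_span by blast
  have inv: "\<forall>g\<in>G. \<forall>f\<in>?U. \<rho> g f \<in> ?U"
  proof (intro ballI)
    fix g f assume g: "g \<in> G" and f: "f \<in> ?U"
    have base: "x \<in> W \<and> \<rho> g x \<in> ?U" if "x \<in> ?S" for x
      using that
    proof
        assume "x = f0" then show ?thesis using f0 g linop_W[OF rho_lin[OF g]] SW by (auto intro: fv.span_base)
      next
        assume "x \<in> (\<lambda>h. \<rho> h f0) ` G"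
        then obtain h where h: "h \<in> G" "x = \<rho> h f0" by blast
        then have "\<rho> g x = \<rho> (g ** h) f0" using rho_mult[OF g h(1) f0(1)] by simp
        moreover have "g ** h \<in> G" using closed g h by blast
        ultimately show ?thesis using h SW by (auto intro: fv.span_base)
    qed
    have sub: "fv.subspace {x. x \<in> W \<and> \<rho> g x \<in> ?U}"
        unfolding fv.subspace_def mem_Collect_eq
      proof (intro conjI ballI allI)
        show "0 \<in> W" using csub_zero[OF csW] by (simp add: zero_fun_def)
        show "\<rho> g 0 \<in> ?U" using linop_zero[OF rho_lin[OF g] csW] fv.span_zero by (simp add: zero_fun_def)
      next
        fix x y assume x: "x \<in> {x. x \<in> W \<and> \<rho> g x \<in> ?U}" and y: "y \<in> {x. x \<in> W \<and> \<rho> g x \<in> ?U}"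
        then show "x + y \<in> W" using csub_add[OF csW] by (auto simp: plus_fun_def)
        have "\<rho> g (\<lambda>z. x z + y z) = (\<lambda>z. \<rho> g x z + \<rho> g y z)" using x y linop_add[OF rho_lin[OF g]] by auto
        then show "\<rho> g (x + y) \<in> ?U" using x y fv.span_add by (auto simp: plus_fun_def)
      next
        fix c x assume x: "x \<in> {x. x \<in> W \<and> \<rho> g x \<in> ?U}"
        then show "fscale c x \<in> W" using csub_scale[OF csW] by (auto simp: fscale_def)
        have "\<rho> g (\<lambda>z. c * x z) = (\<lambda>z. c * \<rho> g x z)" using x linop_scale[OF rho_lin[OF g]] by auto
        then show "\<rho> g (fscale c x) \<in> ?U" using x fv.span_scale[of "\<rho> g x" ?S c] by (auto simp: fscale_def)
    qed
    have "f \<in> W \<and> \<rho> g f \<in> ?U"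
      by (rule fv.span_induct[where P="\<lambda>x. x \<in> W \<and> \<rho> g x \<in> ?U", OF f sub base])
    then show "\<rho> g f \<in> ?U" by blast
  qed
  have "f0 \<in> ?U" by (simp add: fv.span_base)
  then show ?thesis by (rule inv_sub_eq[OF csU UW inv _ f0(2)])
qed


lemma poly_exists: "\<exists>p. p \<noteq> 0 \<and> (\<forall>f\<in>W. peval p f = (\<lambda>_. 0))"
proof -
  obtain f0 where f0: "f0 \<in> W" "f0 \<noteq> (\<lambda>_. 0)" using Wnz by blast
  let ?S = "insert f0 ((\<lambda>h. \<rho> h f0) ` G)"
  define m where "m = card ?S"
  define vs where "vs i = (T ^^ i) f0" for i
  have finS: "finite ?S" using finG by simp
  have vsW: "vs i \<in> W" for i unfolding vs_def using linop_W[OF Tpow_lin f0(1)] .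
  have "\<exists>p. p \<noteq> 0 \<and> peval p f0 = (\<lambda>_. 0)"
  proof (cases "inj_on vs {..m}")
    case False
    then obtain i j where ij: "i \<le> m" "j \<le> m" "i \<noteq> j" "vs i = vs j" unfolding inj_on_def by auto
    define p where "p = monom (1::'c) j - monom 1 i"
    have cp: "coeff p k = (if k = j then 1 else 0) - (if k = i then 1 else 0)" for k
      by (simp add: p_def coeff_monom)
    have p0: "p \<noteq> 0" using cp[of j] ij(3) by auto
    have dp: "degree p \<le> max i j"
      by (rule degree_le) (auto simp: cp)
    have "peval p f0 = (\<lambda>x. \<Sum>k\<le>max i j. coeff p k * (T ^^ k) f0 x)" by (rule peval_bound[OF dp])
    also have "\<dots> = (\<lambda>x. (T ^^ j) f0 x - (T ^^ i) f0 x)"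
    proof
      fix x
      have e: "coeff p k * (T ^^ k) f0 x = (if k = j then (T ^^ k) f0 x else 0) - (if k = i then (T ^^ k) f0 x else 0)" for k
        by (simp add: cp left_diff_distrib)
      show "(\<Sum>k\<le>max i j. coeff p k * (T ^^ k) f0 x) = (T ^^ j) f0 x - (T ^^ i) f0 x"
        by (simp only: e sum_subtractf) (simp add: sum.delta)
    qed
    also have "\<dots> = (\<lambda>_. 0)" using ij(4) by (simp add: vs_def)
    finally show ?thesis using p0 by blast
  next
    case True
    let ?V = "vs ` {..m}"
    have cV: "card ?V = Suc m" using True by (simp add: card_image)
    have VS: "?V \<subseteq> fv.span ?S" using span_eq[OF f0] vsW by auto
    have "\<not> fv.independent ?V"
    proof
      assume "fv.independent ?V"
      then have "card ?V \<le> card ?S" using fv.independent_span_bound[OF finS _ VS] by blast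
      then show False using cV m_def by simp
    qed
    then obtain t u where t: "finite t" "t \<subseteq> ?V" "(\<Sum>v\<in>t. fscale (u v) v) = 0" "\<exists>v\<in>t. u v \<noteq> 0"
      unfolding fv.dependent_explicit by blast
    define c where "c i = (if vs i \<in> t then u (vs i) else 0)" for i
    define p where "p = Poly (map c [0..<Suc m])"
    have cp: "coeff p i = (if i \<le> m then c i else 0)" for i
      by (simp add: p_def nth_default_def less_Suc_eq_le del: upt_Suc)
    obtain v where v: "v \<in> t" "u v \<noteq> 0" using t(4) by blast
    then obtain i where i: "i \<le> m" "v = vs i" using t(2) by blast
    have p0: "p \<noteq> 0" using cp[of i] i v by (auto simp: c_def)
    have dp: "degree p \<le> m" by (rule degree_le) (auto simp: cp)
    have "peval p f0 = (\<lambda>x. \<Sum>k\<le>m. coeff p k * (T ^^ k) f0 x)" by (rule peval_bound[OF dp])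
    also have "\<dots> = (\<lambda>x. \<Sum>k\<in>{k\<in>{..m}. vs k \<in> t}. u (vs k) * vs k x)"
    proof
      fix x
      have "(\<Sum>k\<le>m. coeff p k * (T ^^ k) f0 x) = (\<Sum>k\<le>m. (if vs k \<in> t then u (vs k) * vs k x else 0))"
        by (rule sum.cong) (auto simp: cp c_def vs_def)
      also have "\<dots> = (\<Sum>k\<in>{k\<in>{..m}. vs k \<in> t}. u (vs k) * vs k x)"
        by (rule sum.inter_filter[symmetric]) simp
      finally show "(\<Sum>k\<le>m. coeff p k * (T ^^ k) f0 x) = (\<Sum>k\<in>{k\<in>{..m}. vs k \<in> t}. u (vs k) * vs k x)" .
    qed
    also have "\<dots> = (\<lambda>x. \<Sum>v\<in>t. u v * v x)"
    proof
      fix x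
      have im: "vs ` {k\<in>{..m}. vs k \<in> t} = t" using t(2) by auto
      have inj: "inj_on vs {k\<in>{..m}. vs k \<in> t}" using True by (rule inj_on_subset) auto
      show "(\<Sum>k\<in>{k\<in>{..m}. vs k \<in> t}. u (vs k) * vs k x) = (\<Sum>v\<in>t. u v * v x)"
        using sum.reindex[OF inj, of "\<lambda>v. u v * v x"] im by simp
    qed
    also have "\<dots> = (\<lambda>_. 0)"
    proof
      fix x
      have "(\<Sum>v\<in>t. fscale (u v) v) x = 0" using t(3) by simp
      then show "(\<Sum>v\<in>t. u v * v x) = 0" by (simp add: sum_fun_apply fscale_def)
    qed
    finally show ?thesis using p0 by blast
  qed
  then obtain p where "p \<noteq> 0" "peval p f0 = (\<lambda>_. 0)" by blast
  then show ?thesis using peval_kernel[OF f0] by blast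
qed

theorem schur: "\<exists>c. \<forall>f\<in>W. T f = (\<lambda>x. c * f x)"
  using poly_exists scalar_from_poly by blast

end


lemma SO_sub: "sorth_group B \<subseteq> orth_group B" by (auto simp: sorth_group_def)
lemma SO_mult: "g \<in> sorth_group B \<Longrightarrow> h \<in> sorth_group B \<Longrightarrow> g ** h \<in> sorth_group B"
  by (auto simp: sorth_group_def orth_mult det_mul)
lemma SO_one: "mat 1 \<in> sorth_group B" by (simp add: sorth_group_def orth_one)
lemma SO_iff: "g \<in> sorth_group B \<longleftrightarrow> g \<in> orth_group B \<and> det g = 1" by (simp add: sorth_group_def)

lemma SO_inv:
  assumes "g \<in> sorth_group B" "det B \<noteq> 0"
  obtains h where "h \<in> sorth_group B" "g ** h = mat 1" "h ** g = mat 1"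
proof -
  obtain h where h: "h \<in> orth_group B" "g ** h = mat 1" "h ** g = mat 1"
    using orth_inv[of g B] assms by (auto simp: sorth_group_def)
  have "det g * det h = 1" using h(2) by (metis det_mul det_I)
  then have "det h = 1" using assms by (simp add: sorth_group_def)
  then show ?thesis using h that by (simp add: sorth_group_def)
qed

lemma O_inv:
  assumes "g \<in> orth_group B" "det B \<noteq> 0"
  obtains h where "h \<in> orth_group B" "g ** h = mat 1" "h ** g = mat 1"
  using orth_inv[OF assms] by blast

lemma O_notSO: "g \<in> orth_group B \<Longrightarrow> g \<notin> sorth_group B \<Longrightarrow> det B \<noteq> 0 \<Longrightarrow> det g = -1"
  using det_orth[of g B] by (auto simp: sorth_group_def)

lemma neg_mv: "(mat (-1) ** (g::'a::comm_ring_1^'n::finite^'n)) *v x = - (g *v x)"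
  by (simp add: matrix_vector_mul_assoc[symmetric] mat_neg_mv)

lemma neg_comm: "mat (-1) ** g = g ** (mat (-1) :: 'a::comm_ring_1^'n::finite^'n)"
  by (simp add: matrix_eq neg_mv matrix_vector_mul_assoc[symmetric] mat_neg_mv)
    (simp add: vec_eq_iff matrix_vector_mult_def sum_negf)

lemma neg_neg: "(mat (-1) :: 'a::comm_ring_1^'n::finite^'n) ** (mat (-1) ** g) = g"
  by (simp add: matrix_eq matrix_vector_mul_assoc[symmetric] mat_neg_mv)

lemma neg_det: "det ((mat (-1) :: 'a::comm_ring_1^'n::finite^'n) ** g) = (-1) ^ CARD('n) * det g"
  by (simp add: det_mul det_mat)

lemma one_minus_neg: "mat 1 - (mat (-1) :: 'a::comm_ring_1^'n::finite^'n) ** h = mat 1 + h"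
  by (simp add: matrix_eq neg_mv matrix_vector_mult_diff_rdistrib matrix_vector_mult_add_rdistrib)

lemma one_plus_neg: "mat 1 + h ** (mat (-1) :: 'a::comm_ring_1^'n::finite^'n) = mat 1 - h"
  by (simp add: neg_comm[symmetric] matrix_eq neg_mv matrix_vector_mult_diff_rdistrib matrix_vector_mult_add_rdistrib)

lemma det_conj_minus:
  fixes k k' h :: "'a::comm_ring_1^'n::finite^'n"
  assumes "k ** k' = mat 1"
  shows "det (mat 1 - k ** h ** k') = det (mat 1 - h)"
proof -
  have "mat 1 - k ** h ** k' = k ** (mat 1 - h) ** k'"
    unfolding matrix_eq
  proof
    fix x
    have kk: "k *v (k' *v x) = x" using assms by (metis matrix_vector_mul_assoc matrix_vector_mul_lid)
    have "(k ** (mat 1 - h) ** k') *v x = k *v (k' *v x) - k *v (h *v (k' *v x))"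
      by (simp only: mv3 matrix_vector_mult_diff_rdistrib matrix_vector_mult_diff_distrib matrix_vector_mul_lid)
    also have "\<dots> = (mat 1 - k ** h ** k') *v x" using kk by (simp only: mv3 matrix_vector_mult_diff_rdistrib matrix_vector_mul_lid)
    finally show "(mat 1 - k ** h ** k') *v x = (k ** (mat 1 - h) ** k') *v x" by simp
  qed
  then have "det (mat 1 - k ** h ** k') = det (mat 1 - h) * (det k * det k')" by (simp add: det_mul)
  also have "det k * det k' = 1" using assms by (metis det_mul det_I)
  finally show ?thesis by simp
qed

lemma det_conj_plus:
  fixes k k' h :: "'a::comm_ring_1^'n::finite^'n"
  assumes "k ** k' = mat 1"
  shows "det (mat 1 + k ** h ** k') = det (mat 1 + h)"
proof -
  have "mat 1 + k ** h ** k' = k ** (mat 1 + h) ** k'"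
    unfolding matrix_eq
  proof
    fix x
    have kk: "k *v (k' *v x) = x" using assms by (metis matrix_vector_mul_assoc matrix_vector_mul_lid)
    have "(k ** (mat 1 + h) ** k') *v x = k *v (k' *v x) + k *v (h *v (k' *v x))"
      by (simp only: mv3 matrix_vector_mult_add_rdistrib matrix_vector_right_distrib matrix_vector_mul_lid)
    also have "\<dots> = (mat 1 + k ** h ** k') *v x" using kk by (simp only: mv3 matrix_vector_mult_add_rdistrib matrix_vector_mul_lid)
    finally show "(mat 1 + k ** h ** k') *v x = (k ** (mat 1 + h) ** k') *v x" by simp
  qed
  then have "det (mat 1 + k ** h ** k') = det (mat 1 + h) * (det k * det k')" by (simp add: det_mul)
  also have "det k * det k' = 1" using assms by (metis det_mul det_I)
  finally show ?thesis by simp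
qed

lemma chi_one:
  assumes chi_mult: "\<forall>a b. a \<noteq> 0 \<longrightarrow> b \<noteq> 0 \<longrightarrow> chi (a * b) = chi a * chi b"
    and chi_nz: "\<forall>a. a \<noteq> 0 \<longrightarrow> chi a \<noteq> 0"
  shows "chi (1::'f::field) = (1::'c::field)"
proof -
  have "chi 1 = chi 1 * chi (1::'f)" using chi_mult[rule_format, of 1 1] by simp
  then have "chi 1 = 0 \<or> chi (1::'f) = (1::'c)" by (simp only: mult_cancel_left1)
  then show ?thesis using chi_nz[rule_format, of 1] by simp
qed

lemma chi_power:
  assumes chi_mult: "\<forall>a b. a \<noteq> 0 \<longrightarrow> b \<noteq> 0 \<longrightarrow> chi (a * b) = chi a * chi b"
    and chi_nz: "\<forall>a. a \<noteq> 0 \<longrightarrow> chi a \<noteq> 0" and a: "(a::'f::field) \<noteq> 0"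
  shows "chi (a ^ n) = (chi a :: 'c::field) ^ n"
proof (induction n)
  case 0 then show ?case using chi_one[OF chi_mult chi_nz] by simp
next
  case (Suc n) then show ?case using chi_mult a by simp
qed

lemma chi_inverse:
  assumes chi_mult: "\<forall>a b. a \<noteq> 0 \<longrightarrow> b \<noteq> 0 \<longrightarrow> chi (a * b) = chi a * chi b"
    and chi_nz: "\<forall>a. a \<noteq> 0 \<longrightarrow> chi a \<noteq> 0" and a: "(a::'f::field) \<noteq> 0"
  shows "chi (inverse a) = inverse (chi a :: 'c::field)"
proof -
  have "chi a * chi (inverse a) = 1"
    using chi_mult[rule_format, of a "inverse a"] a chi_one[OF chi_mult chi_nz] by simp
  then show ?thesis by (metis inverse_unique)
qed

lemma chi_det:
  fixes g :: "'f::{finite,field}^'n::finite^'n" and chi :: "'f \<Rightarrow> 'c::field"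
  assumes chi_mult: "\<forall>a b. a \<noteq> 0 \<longrightarrow> b \<noteq> 0 \<longrightarrow> chi (a * b) = chi a * chi b"
    and chi_nz: "\<forall>a. a \<noteq> 0 \<longrightarrow> chi a \<noteq> 0" and two: "(2::'f) \<noteq> 0"
    and d: "det (mat 1 - g) \<noteq> 0"
  shows "chi (det (mat (inverse 2) ** (g - mat 1))) = inverse (chi (-2)) ^ CARD('n) * chi (det (mat 1 - g))"
proof -
  have "det (g - mat 1) = (-1) ^ CARD('n) * det (mat 1 - g)"
    using det_neg_mat[of "mat 1 - g"] by (simp only: minus_diff_eq)
  then have "det (mat (inverse 2) ** (g - mat 1)) = inverse 2 ^ CARD('n) * ((-1) ^ CARD('n) * det (mat 1 - g))"
    by (simp add: det_mul det_mat)
  also have "\<dots> = inverse (-2) ^ CARD('n) * det (mat 1 - g)"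
    by (simp add: power_mult_distrib[symmetric] mult.assoc)
  finally have e: "det (mat (inverse 2) ** (g - mat 1)) = inverse (-2) ^ CARD('n) * det (mat 1 - g)" .
  have n2: "(-2::'f) \<noteq> 0" using two by simp
  have "chi (inverse (-2) ^ CARD('n) * det (mat 1 - g)) = chi (inverse (-2) ^ CARD('n)) * chi (det (mat 1 - g))"
    using chi_mult d n2 by simp
  also have "chi (inverse (-2) ^ CARD('n)) = inverse (chi (-2)) ^ CARD('n)"
    using chi_power[OF chi_mult chi_nz, of "inverse (-2)"] chi_inverse[OF chi_mult chi_nz n2] n2 by simp
  finally show ?thesis using e by simp
qed

definition F0 :: "'f::{finite,field}^'n::finite^'n \<Rightarrow> 'c::field \<Rightarrow> ('f \<Rightarrow> 'c) \<Rightarrow> 'f^'n^'n \<Rightarrow> 'c" where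
  "F0 B sq chi g = M_V B sq (f0_V B chi) (iota g (mat 1))"

lemma F0_val:
  fixes B :: "'f::{finite,field}^'n::finite^'n" and chi :: "'f \<Rightarrow> 'c::field"
  assumes odd: "odd CARD('f)" and gO: "g \<in> orth_group B"
    and chi_mult: "\<forall>a b. a \<noteq> 0 \<longrightarrow> b \<noteq> 0 \<longrightarrow> chi (a * b) = chi a * chi b"
    and chi_nz: "\<forall>a. a \<noteq> 0 \<longrightarrow> chi a \<noteq> 0"
  shows "F0 B sq chi g = inverse (lie_sqrt_card B sq) *
     (if det (mat 1 - g) = 0 then 0 else inverse (chi (-2)) ^ CARD('n) * chi (det (mat 1 - g)))"
  using core_sum[OF odd gO, of chi] chi_det[OF chi_mult chi_nz two_nz[OF odd], of g]
  by (simp add: F0_def M_V_def mv3 matrix_mul_assoc)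


lemma scalar_of_eq:
  assumes nz: "\<exists>f\<in>W. f \<noteq> (\<lambda>_. 0)" and T: "\<forall>f\<in>W. T f = (\<lambda>x. c * f x)"
  shows "scalar_of W T = (c::'c::field)"
  unfolding scalar_of_def
proof (rule the_equality)
  show "\<forall>f\<in>W. T f = (\<lambda>x. c * f x)" by (rule T)
next
  fix c' assume c': "\<forall>f\<in>W. T f = (\<lambda>x. c' * f x)"
  obtain f where f: "f \<in> W" "f \<noteq> (\<lambda>_. 0)" using nz by blast
  then obtain x where x: "f x \<noteq> 0" by auto
  have e1: "T f = (\<lambda>x. c' * f x)" using c' f by blast
  have e2: "T f = (\<lambda>x. c * f x)" using T f by blast
  have "(\<lambda>x. c' * f x) = (\<lambda>x. c * f x)" using trans[OF sym[OF e1] e2] .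
  then have "c' * f x = c * f x" by (rule fun_cong)
  then show "c' = c" using x by simp
qed

lemma irr_nz: "irred_rep G W \<rho> \<Longrightarrow> \<exists>f\<in>W. f \<noteq> (\<lambda>_. 0)"
proof -
  assume a: "irred_rep G W \<rho>"
  then have "W \<noteq> {\<lambda>_. 0}" by (simp add: irred_rep_def)
  moreover have "(\<lambda>_. 0) \<in> W" using a by (simp add: irred_rep_def is_rep_def csubspace_def)
  ultimately show ?thesis by blast
qed

definition opr :: "('f::field^'n::finite^'n) set \<Rightarrow> ('f^'n^'n \<Rightarrow> ('x \<Rightarrow> 'c::field) \<Rightarrow> ('x \<Rightarrow> 'c))
   \<Rightarrow> ('f^'n^'n \<Rightarrow> 'c) \<Rightarrow> ('x \<Rightarrow> 'c) \<Rightarrow> ('x \<Rightarrow> 'c)" where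
  "opr G \<rho> c \<phi> = (\<lambda>x. \<Sum>h\<in>G. c h * \<rho> h \<phi> x)"

lemma opr_lin:
  assumes rep: "is_rep G W \<rho>" and fin: "finite G"
  shows "linop W (opr G \<rho> c)"
proof -
  have cs: "csubspace W" using rep by (simp add: is_rep_def)
  show ?thesis
    unfolding linop_def
  proof (intro conjI ballI allI)
    fix f assume "f \<in> W"
    then show "opr G \<rho> c f \<in> W" unfolding opr_def
      by (intro csub_sum[OF cs fin]) (use rep_linop[OF rep] linop_W in blast)
  next
    fix f h assume f: "f \<in> W" and h: "h \<in> W"
    have "\<rho> g (\<lambda>x. f x + h x) = (\<lambda>x. \<rho> g f x + \<rho> g h x)" if "g \<in> G" for g
      using linop_add[OF rep_linop[OF rep that] f h] .
    then show "opr G \<rho> c (\<lambda>x. f x + h x) = (\<lambda>x. opr G \<rho> c f x + opr G \<rho> c h x)"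
      unfolding opr_def by (simp add: distrib_left sum.distrib)
  next
    fix d f assume f: "f \<in> W"
    have "\<rho> g (\<lambda>x. d * f x) = (\<lambda>x. d * \<rho> g f x)" if "g \<in> G" for g
      using linop_scale[OF rep_linop[OF rep that] f] .
    then show "opr G \<rho> c (\<lambda>x. d * f x) = (\<lambda>x. d * opr G \<rho> c f x)"
      unfolding opr_def by (simp add: sum_distrib_left mult.left_commute)
  qed
qed

lemma opr_comm:
  assumes rep: "is_rep G W \<rho>" and fin: "finite G" and closed: "\<forall>g\<in>G. \<forall>h\<in>G. g ** h \<in> G"
    and inv: "\<forall>k\<in>G. \<exists>k'\<in>G. k ** k' = mat 1 \<and> k' ** k = mat 1"
    and cinv: "\<forall>k\<in>G. \<forall>k'\<in>G. k ** k' = mat 1 \<longrightarrow> (\<forall>h\<in>G. c (k ** h ** k') = c h)"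
    and k: "k \<in> G" and f: "f \<in> W"
  shows "opr G \<rho> c (\<rho> k f) = \<rho> k (opr G \<rho> c f)"
proof -
  have cs: "csubspace W" using rep by (simp add: is_rep_def)
  have mult: "\<rho> (g ** h) f = \<rho> g (\<rho> h f)" if "g \<in> G" "h \<in> G" for g h
    using rep that f by (simp add: is_rep_def)
  obtain k' where k': "k' \<in> G" "k ** k' = mat 1" "k' ** k = mat 1" using inv k by blast
  have r: "\<rho> k (opr G \<rho> c f) = (\<lambda>x. \<Sum>h\<in>G. c h * \<rho> (k ** h) f x)"
  proof -
    have "\<rho> k (opr G \<rho> c f) = (\<lambda>x. \<Sum>h\<in>G. c h * \<rho> k (\<rho> h f) x)"
      unfolding opr_def
      by (rule linop_sum[OF rep_linop[OF rep k] cs fin]) (use rep_linop[OF rep] linop_W f in blast)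
    then show ?thesis using mult k by simp
  qed
  have l: "opr G \<rho> c (\<rho> k f) = (\<lambda>x. \<Sum>h\<in>G. c h * \<rho> (h ** k) f x)"
    unfolding opr_def using mult k by simp
  have "(\<Sum>h\<in>G. c h * \<rho> (h ** k) f x) = (\<Sum>h\<in>G. c h * \<rho> (k ** h) f x)" for x
  proof (rule sum.reindex_bij_witness[where j = "\<lambda>h. k' ** h ** k" and i = "\<lambda>h. k ** h ** k'"])
    fix a assume a: "a \<in> G"
    show "k ** (k' ** a ** k) ** k' = a"
      by (metis k'(2) matrix_mul_assoc matrix_mul_lid matrix_mul_rid)
    show "k' ** a ** k \<in> G" using closed a k k' by blast
    show "c (k' ** a ** k) * \<rho> (k ** (k' ** a ** k)) f x = c a * \<rho> (a ** k) f x"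
    proof -
      have "c (k' ** a ** k) = c a" using cinv k' k a by blast
      moreover have "k ** (k' ** a ** k) = a ** k" by (metis k'(2) matrix_mul_assoc matrix_mul_lid)
      ultimately show ?thesis by simp
    qed
  next
    fix b assume b: "b \<in> G"
    show "k' ** (k ** b ** k') ** k = b"
      by (metis k'(3) matrix_mul_assoc matrix_mul_lid matrix_mul_rid)
    show "k ** b ** k' \<in> G" using closed b k k' by blast
  qed
  then show ?thesis using l r by simp
qed

lemma opr_scalar:
  fixes W :: "('x \<Rightarrow> 'c::field) set"
  assumes irr: "irred_rep G W \<rho>" and fin: "finite G" and closed: "\<forall>g\<in>G. \<forall>h\<in>G. g ** h \<in> G"
    and inv: "\<forall>k\<in>G. \<exists>k'\<in>G. k ** k' = mat 1 \<and> k' ** k = mat 1"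
    and cinv: "\<forall>k\<in>G. \<forall>k'\<in>G. k ** k' = mat 1 \<longrightarrow> (\<forall>h\<in>G. c (k ** h ** k') = c h)"
    and alg: "\<forall>p :: 'c::field poly. 0 < degree p \<longrightarrow> (\<exists>z. poly p z = 0)"
  shows "\<exists>l. \<forall>f\<in>W. opr G \<rho> c f = (\<lambda>x. l * f x)"
proof -
  have rep: "is_rep G W \<rho>" using irr by (simp add: irred_rep_def)
  interpret S: schur_ctx G W \<rho> "opr G \<rho> c"
  proof (unfold_locales)
    show "linop W (opr G \<rho> c)" by (rule opr_lin[OF rep fin])
    show "\<forall>g\<in>G. \<forall>f\<in>W. opr G \<rho> c (\<rho> g f) = \<rho> g (opr G \<rho> c f)"
      using opr_comm[OF rep fin closed inv cinv] by blast
  qed (use irr fin closed alg in auto)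
  show ?thesis by (rule S.schur)
qed

lemma rho_scalar:
  fixes W :: "('x \<Rightarrow> 'c::field) set"
  assumes irr: "irred_rep G W \<rho>" and fin: "finite G" and closed: "\<forall>g\<in>G. \<forall>h\<in>G. g ** h \<in> G"
    and z: "z \<in> G" and zc: "\<forall>g\<in>G. z ** g = g ** z"
    and alg: "\<forall>p :: 'c::field poly. 0 < degree p \<longrightarrow> (\<exists>z. poly p z = 0)"
  shows "\<exists>l. \<forall>f\<in>W. \<rho> z f = (\<lambda>x. l * f x)"
proof -
  have rep: "is_rep G W \<rho>" using irr by (simp add: irred_rep_def)
  have comm: "\<forall>g\<in>G. \<forall>f\<in>W. \<rho> z (\<rho> g f) = \<rho> g (\<rho> z f)"
    using rep z zc unfolding is_rep_def by metis
  interpret S: schur_ctx G W \<rho> "\<rho> z"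
  proof (unfold_locales)
    show "linop W (\<rho> z)" by (rule rep_linop[OF rep z])
  qed (use irr fin closed comm alg in auto)
  show ?thesis by (rule S.schur)
qed


locale main_ctx =
  fixes B :: "'f::{finite,field}^'n::finite^'n"
    and sq :: "'c::field"
    and chi :: "'f \<Rightarrow> 'c"
    and W :: "('x \<Rightarrow> 'c) set"
    and \<rho> :: "'f^'n^'n \<Rightarrow> ('x \<Rightarrow> 'c) \<Rightarrow> ('x \<Rightarrow> 'c)"
  assumes q_odd: "odd CARD('f)"
    and C_alg_closed: "\<forall>p :: 'c poly. 0 < degree p \<longrightarrow> (\<exists>z. poly p z = 0)"
    and B_nondeg: "det B \<noteq> 0"
    and chi_mult: "\<forall>a b. a \<noteq> 0 \<longrightarrow> b \<noteq> 0 \<longrightarrow> chi (a * b) = chi a * chi b"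
    and chi_nz: "\<forall>a. a \<noteq> 0 \<longrightarrow> chi a \<noteq> 0"
    and irr: "irred_rep (sorth_group B) W \<rho>"
begin

abbreviation "SOG \<equiv> sorth_group B"
abbreviation "OG \<equiv> orth_group B"
definition LL :: 'c where "LL = inverse (lie_sqrt_card B sq)"
definition KK :: 'c where "KK = inverse (chi (-2)) ^ CARD('n)"
definition cj :: "'f^'n^'n \<Rightarrow> 'c" where
  "cj h = LL * (if det (mat 1 + h) = 0 then 0 else chi (det (mat 1 + h)))"

lemma two: "(2::'f) \<noteq> 0" using two_nz[OF q_odd] .
lemma rep: "is_rep SOG W \<rho>" using irr by (simp add: irred_rep_def)
lemma csW: "csubspace W" using rep by (simp add: is_rep_def)
lemma finSO: "finite SOG" by simp
lemma finO: "finite OG" by simp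
lemma SOclosed: "\<forall>g\<in>SOG. \<forall>h\<in>SOG. g ** h \<in> SOG" using SO_mult by blast
lemma SOinv: "\<forall>k\<in>SOG. \<exists>k'\<in>SOG. k ** k' = mat 1 \<and> k' ** k = mat 1"
  using SO_inv[OF _ B_nondeg] by metis
lemma rhoW: "g \<in> SOG \<Longrightarrow> f \<in> W \<Longrightarrow> \<rho> g f \<in> W" using rep by (simp add: is_rep_def)
lemma rho_mult: "g \<in> SOG \<Longrightarrow> h \<in> SOG \<Longrightarrow> f \<in> W \<Longrightarrow> \<rho> (g ** h) f = \<rho> g (\<rho> h f)"
  using rep by (simp add: is_rep_def)
lemma Wnz: "\<exists>f\<in>W. f \<noteq> (\<lambda>_. 0)" using irr_nz[OF irr] .

lemma Fval:
  assumes "g \<in> OG"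
  shows "F0 B sq chi g = LL * (if det (mat 1 - g) = 0 then 0 else KK * chi (det (mat 1 - g)))"
  using F0_val[OF q_odd assms chi_mult chi_nz, of sq] by (simp add: LL_def KK_def)

lemma cj_inv: "\<forall>k\<in>SOG. \<forall>k'\<in>SOG. k ** k' = mat 1 \<longrightarrow> (\<forall>h\<in>SOG. cj (k ** h ** k') = cj h)"
  by (simp add: cj_def det_conj_plus)

lemma lj_ex: obtains lj where "\<forall>f\<in>W. opr SOG \<rho> cj f = (\<lambda>x. lj * f x)"
  using opr_scalar[OF irr finSO SOclosed SOinv cj_inv C_alg_closed] by blast

lemma j_eq: "j_factor B sq chi W \<rho> = scalar_of W (opr SOG \<rho> cj)"
proof -
  have "(\<lambda>\<phi> x. LL * (\<Sum>g\<in>{g\<in>SOG. det (mat 1 + g) \<noteq> 0}. chi (det (mat 1 + g)) * \<rho> g \<phi> x)) = opr SOG \<rho> cj"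
  proof (intro ext)
    fix \<phi> x
    have "(\<Sum>g\<in>{g\<in>SOG. det (mat 1 + g) \<noteq> 0}. chi (det (mat 1 + g)) * \<rho> g \<phi> x)
        = (\<Sum>g\<in>SOG. if det (mat 1 + g) \<noteq> 0 then chi (det (mat 1 + g)) * \<rho> g \<phi> x else 0)"
      by (rule sum.inter_filter) simp
    then show "LL * (\<Sum>g\<in>{g\<in>SOG. det (mat 1 + g) \<noteq> 0}. chi (det (mat 1 + g)) * \<rho> g \<phi> x) = opr SOG \<rho> cj \<phi> x"
      by (simp add: opr_def cj_def sum_distrib_left if_distrib if_distribR mult.assoc cong: if_cong)
        (rule sum.cong, auto)
  qed
  then show ?thesis by (simp add: j_factor_def LL_def)
qed

lemma j_val: "\<forall>f\<in>W. opr SOG \<rho> cj f = (\<lambda>x. lj * f x) \<Longrightarrow> j_factor B sq chi W \<rho> = lj"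
  using j_eq scalar_of_eq[OF Wnz] by simp


lemma self_neg_zero: "(a::'f) = - a \<Longrightarrow> a = 0"
proof -
  assume "a = - a"
  then have "a + a = a + - a" by (rule arg_cong[where f="\<lambda>y. a + y"])
  then have "2 * a = 0" by (simp only: mult_2) simp
  then show "a = 0" using two by simp
qed

lemma ZV_eq: "Z_V B r (M_V B sq (f0_V B chi)) \<phi> = (\<lambda>x. \<Sum>g\<in>OG. F0 B sq chi g * r g \<phi> x)"
  by (simp add: Z_V_def F0_def)

lemma detO: "g \<in> OG \<Longrightarrow> det g = 1 \<or> det g = -1" using det_orth[OF _ B_nondeg] .

lemma one_ne_neg_one: "(1::'f) \<noteq> -1"
proof
  assume "(1::'f) = -1"
  then have "(1::'f) = 0" using self_neg_zero by blast
  then show False by simp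
qed

lemma F_SO_zero_odd:
  assumes odd: "odd CARD('n)" and g: "g \<in> SOG"
  shows "F0 B sq chi g = 0"
proof -
  have gO: "g \<in> OG" and dg: "det g = 1" using g by (auto simp: SO_iff)
  have e: "det (mat 1 - g) = (-1) ^ CARD('n) * det g * det (mat 1 - g)"
    using det_one_minus[OF gO B_nondeg] .
  have pm: "(-1::'f) ^ CARD('n) = -1" using odd by simp
  have "det (mat 1 - g) = -1 * 1 * det (mat 1 - g)" using e unfolding pm dg .
  then have "det (mat 1 - g) = - det (mat 1 - g)" by (simp only: mult_minus1 mult_1)
  then have "det (mat 1 - g) = 0" by (rule self_neg_zero)
  then show ?thesis using Fval g by (simp add: SO_iff)
qed

lemma F_off_zero_even:
  assumes ev: "even CARD('n)" and g: "g \<in> OG" "g \<notin> SOG"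
  shows "F0 B sq chi g = 0"
proof -
  have dg: "det g = -1" using O_notSO[OF g B_nondeg] .
  have "det (mat 1 - g) = (-1) ^ CARD('n) * det g * det (mat 1 - g)"
    using det_one_minus[OF g(1) B_nondeg] .
  moreover have pm: "(-1::'f) ^ CARD('n) = 1" using ev by simp
  ultimately have "det (mat 1 - g) = 1 * -1 * det (mat 1 - g)" unfolding dg by simp
  then have "det (mat 1 - g) = - det (mat 1 - g)" by (simp only: mult_minus1 mult_1)
  then have "det (mat 1 - g) = 0" by (rule self_neg_zero)
  then show ?thesis using Fval g by simp
qed

lemma negO: "g \<in> OG \<Longrightarrow> mat (-1) ** g \<in> OG" by (rule orth_mult[OF orth_neg])

lemma F_neg: "h \<in> SOG \<Longrightarrow> F0 B sq chi (mat (-1) ** h) = KK * cj h"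
proof -
  assume h: "h \<in> SOG"
  then have "mat (-1) ** h \<in> OG" by (intro negO) (simp add: SO_iff)
  then show ?thesis using Fval by (simp add: one_minus_neg cj_def)
qed

lemma F_SO: "h \<in> SOG \<Longrightarrow> F0 B sq chi h = KK * cj (h ** mat (-1))"
  using Fval by (simp add: one_plus_neg cj_def SO_iff)

lemma negSO: "odd CARD('n) \<Longrightarrow> g \<in> OG \<Longrightarrow> g \<notin> SOG \<Longrightarrow> mat (-1) ** g \<in> SOG"
  using O_notSO[OF _ _ B_nondeg, of g] by (simp add: SO_iff negO neg_det)

lemma neg_notSO: "odd CARD('n) \<Longrightarrow> g \<in> SOG \<Longrightarrow> mat (-1) ** g \<notin> SOG"
  using one_ne_neg_one by (simp add: SO_iff neg_det)

lemma negone_SO: "even CARD('n) \<Longrightarrow> mat (-1) \<in> SOG"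
  by (simp add: SO_iff orth_neg det_mat)

lemma negone_notSO: "odd CARD('n) \<Longrightarrow> mat (-1) \<notin> SOG"
  using one_ne_neg_one by (simp add: SO_iff det_mat)

lemma negneg1: "(mat (-1) :: 'f^'n^'n) ** mat (-1) = mat 1"
  using neg_neg[of "mat 1"] by simp

lemma SO_mult_iff:
  assumes g: "g \<in> OG" and h: "h \<in> OG"
  shows "g ** h \<in> SOG \<longleftrightarrow> (g \<in> SOG \<longleftrightarrow> h \<in> SOG)"
proof -
  have gh: "g ** h \<in> OG" using orth_mult g h .
  have "det (g ** h) = det g * det h" by (rule det_mul)
  then show ?thesis using detO[OF g] detO[OF h] gh g h one_ne_neg_one
    by (auto simp: SO_iff)
qed


definition rho2 :: "'f^'n^'n \<Rightarrow> ('x \<Rightarrow> 'c) \<Rightarrow> ('x \<Rightarrow> 'c)" where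
  "rho2 g = (if g \<in> SOG then \<rho> g else \<rho> (mat (-1) ** g))"

lemma rho_lin: "g \<in> SOG \<Longrightarrow> linop W (\<rho> g)" by (rule rep_linop[OF rep])

lemma rho_one: "f \<in> W \<Longrightarrow> \<rho> (mat 1) f = f" using rep by (simp add: is_rep_def)

lemma negassoc1: "mat (-1) ** (g ** h) = g ** (mat (-1) ** (h::'f^'n^'n))"
  by (metis matrix_mul_assoc neg_comm)
lemma negassoc2: "mat (-1) ** (g ** h) = (mat (-1) ** g) ** (h::'f^'n^'n)"
  by (metis matrix_mul_assoc)
lemma negassoc3: "g ** h = (mat (-1) ** g) ** (mat (-1) ** (h::'f^'n^'n))"
  by (metis matrix_mul_assoc neg_comm neg_neg)

lemma rho2_props:
  assumes odd: "odd CARD('n)"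
  shows "is_rep OG W rho2 \<and> (\<forall>g\<in>SOG. \<forall>f\<in>W. rho2 g f = \<rho> g f) \<and> (\<forall>f\<in>W. rho2 (mat (-1)) f = f)"
proof (intro conjI ballI)
  have lin: "g \<in> OG \<Longrightarrow> linop W (rho2 g)" for g
    using negSO[OF odd, of g] by (auto simp: rho2_def intro: rho_lin)
  show "is_rep OG W rho2"
    unfolding is_rep_def
  proof (intro conjI ballI allI)
    show "csubspace W" by (rule csW)
    show "\<And>g f. g \<in> OG \<Longrightarrow> f \<in> W \<Longrightarrow> rho2 g f \<in> W" using lin linop_W by blast
    show "\<And>g f h. g \<in> OG \<Longrightarrow> f \<in> W \<Longrightarrow> h \<in> W \<Longrightarrow> rho2 g (\<lambda>x. f x + h x) = (\<lambda>x. rho2 g f x + rho2 g h x)"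
      using lin linop_add by blast
    show "\<And>g c f. g \<in> OG \<Longrightarrow> f \<in> W \<Longrightarrow> rho2 g (\<lambda>x. c * f x) = (\<lambda>x. c * rho2 g f x)"
      using lin linop_scale by blast
    show "\<And>f. f \<in> W \<Longrightarrow> rho2 (mat 1) f = f" by (simp add: rho2_def SO_one rho_one)
    fix g h f assume g: "g \<in> OG" and h: "h \<in> OG" and f: "f \<in> W"
    show "rho2 (g ** h) f = rho2 g (rho2 h f)"
    proof (cases "g \<in> SOG"; cases "h \<in> SOG")
      assume a: "g \<in> SOG" "h \<in> SOG"
      then show ?thesis using SO_mult_iff[OF g h] rho_mult[OF a f] by (simp add: rho2_def)
    next
      assume a: "g \<in> SOG" "h \<notin> SOG"
      have h': "mat (-1) ** h \<in> SOG" using negSO[OF odd h a(2)] .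
      show ?thesis using SO_mult_iff[OF g h] a rho_mult[OF a(1) h' f] by (simp add: rho2_def negassoc1)
    next
      assume a: "g \<notin> SOG" "h \<in> SOG"
      have g': "mat (-1) ** g \<in> SOG" using negSO[OF odd g a(1)] .
      show ?thesis using SO_mult_iff[OF g h] a rho_mult[OF g' a(2) f] by (simp add: rho2_def negassoc2)
    next
      assume a: "g \<notin> SOG" "h \<notin> SOG"
      have g': "mat (-1) ** g \<in> SOG" using negSO[OF odd g a(1)] .
      have h': "mat (-1) ** h \<in> SOG" using negSO[OF odd h a(2)] .
      have "rho2 (g ** h) f = \<rho> ((mat (-1) ** g) ** (mat (-1) ** h)) f"
        using SO_mult_iff[OF g h] a by (simp add: rho2_def negassoc3[symmetric])
      also have "\<dots> = \<rho> (mat (-1) ** g) (\<rho> (mat (-1) ** h) f)" by (rule rho_mult[OF g' h' f])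
      finally show ?thesis using a by (simp add: rho2_def)
    qed
  qed
next
  fix g f assume "g \<in> SOG" "f \<in> W"
  then show "rho2 g f = \<rho> g f" by (simp add: rho2_def)
next
  fix f assume "f \<in> W"
  then show "rho2 (mat (-1)) f = f"
    using negone_notSO[OF odd] negneg1 rho_one by (simp add: rho2_def)
qed

lemma odd_Z:
  assumes odd: "odd CARD('n)"
    and r: "is_rep OG W r" "\<forall>g\<in>SOG. \<forall>f\<in>W. r g f = \<rho> g f" "\<forall>f\<in>W. r (mat (-1)) f = f"
    and lj: "\<forall>f\<in>W. opr SOG \<rho> cj f = (\<lambda>x. lj * f x)"
    and f: "f \<in> W"
  shows "Z_V B r (M_V B sq (f0_V B chi)) f = (\<lambda>x. (KK * lj) * f x)"
proof -
  have rneg: "r g f = \<rho> (mat (-1) ** g) f" if g: "g \<in> OG" "g \<notin> SOG" for g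
  proof -
    have g': "mat (-1) ** g \<in> SOG" using negSO[OF odd g] .
    then have g'O: "mat (-1) ** g \<in> OG" by (simp add: SO_iff)
    have "r g f = r (mat (-1) ** (mat (-1) ** g)) f" by (simp add: neg_neg)
    also have "\<dots> = r (mat (-1)) (r (mat (-1) ** g) f)"
      using r(1) g'O f orth_neg unfolding is_rep_def by blast
    also have "\<dots> = r (mat (-1) ** g) f"
      using r(1,3) g'O f unfolding is_rep_def by blast
    also have "\<dots> = \<rho> (mat (-1) ** g) f" using r(2) g' f by blast
    finally show ?thesis .
  qed
  show ?thesis
  proof
    fix x
    have "(\<Sum>g\<in>OG. F0 B sq chi g * r g f x) = (\<Sum>g\<in>OG - SOG. F0 B sq chi g * r g f x) + (\<Sum>g\<in>SOG. F0 B sq chi g * r g f x)"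
      by (rule sum.subset_diff[OF SO_sub]) simp
    also have "(\<Sum>g\<in>SOG. F0 B sq chi g * r g f x) = 0" using F_SO_zero_odd[OF odd] by simp
    also have "(\<Sum>g\<in>OG - SOG. F0 B sq chi g * r g f x) = (\<Sum>g\<in>OG - SOG. F0 B sq chi g * \<rho> (mat (-1) ** g) f x)"
      using rneg by (intro sum.cong) auto
    also have "\<dots> = (\<Sum>h\<in>SOG. F0 B sq chi (mat (-1) ** h) * \<rho> h f x)"
    proof (rule sum.reindex_bij_witness[where i = "\<lambda>g. mat (-1) ** g" and j = "\<lambda>g. mat (-1) ** g"])
      fix a assume a: "a \<in> OG - SOG"
      show "mat (-1) ** (mat (-1) ** a) = a" by (rule neg_neg)
      show "mat (-1) ** a \<in> SOG" using negSO[OF odd] a by blast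
      show "F0 B sq chi (mat (-1) ** (mat (-1) ** a)) * \<rho> (mat (-1) ** a) f x = F0 B sq chi a * \<rho> (mat (-1) ** a) f x"
        by (simp add: neg_neg)
    next
      fix b assume b: "b \<in> SOG"
      show "mat (-1) ** (mat (-1) ** b) = b" by (rule neg_neg)
      show "mat (-1) ** b \<in> OG - SOG" using neg_notSO[OF odd b] negO b by (auto simp: SO_iff)
    qed
    also have "\<dots> = (\<Sum>h\<in>SOG. KK * (cj h * \<rho> h f x))" using F_neg by (intro sum.cong) auto
    also have "\<dots> = KK * opr SOG \<rho> cj f x" by (simp add: opr_def sum_distrib_left)
    also have "\<dots> = KK * lj * f x" using lj f by simp
    finally show "Z_V B r (M_V B sq (f0_V B chi)) f x = KK * lj * f x" by (simp add: ZV_eq)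
  qed
qed

end


context main_ctx
begin

lemma om_ex:
  assumes ev: "even CARD('n)"
  obtains om where "\<forall>f\<in>W. \<rho> (mat (-1)) f = (\<lambda>x. om * f x)"
proof -
  have "\<exists>l. \<forall>f\<in>W. \<rho> (mat (-1)) f = (\<lambda>x. l * f x)"
    by (rule rho_scalar[OF irr finSO SOclosed negone_SO[OF ev] _ C_alg_closed]) (simp add: neg_comm)
  then show ?thesis using that by blast
qed

lemma negneg_r: "(h ** mat (-1)) ** mat (-1) = (h::'f^'n^'n)"
  by (simp add: matrix_mul_assoc[symmetric] negneg1)

lemma Zso:
  assumes ev: "even CARD('n)" and om: "\<forall>f\<in>W. \<rho> (mat (-1)) f = (\<lambda>x. om * f x)"
    and lj: "\<forall>f\<in>W. opr SOG \<rho> cj f = (\<lambda>x. lj * f x)" and f: "f \<in> W"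
  shows "(\<Sum>h\<in>SOG. F0 B sq chi h * \<rho> h f x) = KK * om * lj * f x"
proof -
  have n1: "mat (-1) \<in> SOG" by (rule negone_SO[OF ev])
  have "(\<Sum>h\<in>SOG. F0 B sq chi h * \<rho> h f x) = (\<Sum>h\<in>SOG. KK * cj (h ** mat (-1)) * \<rho> h f x)"
    using F_SO by (intro sum.cong) auto
  also have "\<dots> = (\<Sum>h\<in>SOG. KK * cj h * \<rho> (h ** mat (-1)) f x)"
  proof (rule sum.reindex_bij_witness[where i = "\<lambda>h. h ** mat (-1)" and j = "\<lambda>h. h ** mat (-1)"])
    fix a assume a: "a \<in> SOG"
    show "a ** mat (-1) ** mat (-1) = a" by (rule negneg_r)
    show "a ** mat (-1) \<in> SOG" using SOclosed a n1 by blast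
    show "KK * cj (a ** mat (-1)) * \<rho> (a ** mat (-1) ** mat (-1)) f x = KK * cj (a ** mat (-1)) * \<rho> a f x"
      by (simp add: negneg_r)
  next
    fix b assume b: "b \<in> SOG"
    show "b ** mat (-1) ** mat (-1) = b" by (rule negneg_r)
    show "b ** mat (-1) \<in> SOG" using SOclosed b n1 by blast
  qed
  also have "\<dots> = (\<Sum>h\<in>SOG. KK * om * (cj h * \<rho> h f x))"
  proof (rule sum.cong[OF refl])
    fix h assume h: "h \<in> SOG"
    have "\<rho> (h ** mat (-1)) f = \<rho> h (\<rho> (mat (-1)) f)" by (rule rho_mult[OF h n1 f])
    also have "\<dots> = \<rho> h (\<lambda>x. om * f x)" using om f by simp
    also have "\<dots> = (\<lambda>x. om * \<rho> h f x)" by (rule linop_scale[OF rho_lin[OF h] f])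
    finally show "KK * cj h * \<rho> (h ** mat (-1)) f x = KK * om * (cj h * \<rho> h f x)" by simp
  qed
  also have "\<dots> = KK * om * opr SOG \<rho> cj f x" by (simp add: opr_def sum_distrib_left)
  also have "\<dots> = KK * om * lj * f x" using lj f by simp
  finally show ?thesis .
qed

lemma Zeven:
  assumes ev: "even CARD('n)" and om: "\<forall>f\<in>W. \<rho> (mat (-1)) f = (\<lambda>x. om * f x)"
    and lj: "\<forall>f\<in>W. opr SOG \<rho> cj f = (\<lambda>x. lj * f x)"
    and r: "\<forall>g\<in>SOG. \<forall>f\<in>W. r g f = \<rho> g f" and f: "f \<in> W"
  shows "Z_V B r (M_V B sq (f0_V B chi)) f = (\<lambda>x. (KK * om * lj) * f x)"
proof
  fix x
  have "(\<Sum>g\<in>OG. F0 B sq chi g * r g f x) = (\<Sum>g\<in>OG - SOG. F0 B sq chi g * r g f x) + (\<Sum>g\<in>SOG. F0 B sq chi g * r g f x)"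
    by (rule sum.subset_diff[OF SO_sub]) simp
  also have "(\<Sum>g\<in>OG - SOG. F0 B sq chi g * r g f x) = 0" using F_off_zero_even[OF ev] by simp
  also have "(\<Sum>g\<in>SOG. F0 B sq chi g * r g f x) = (\<Sum>g\<in>SOG. F0 B sq chi g * \<rho> g f x)"
    using r f by simp
  also have "\<dots> = KK * om * lj * f x" by (rule Zso[OF ev om lj f])
  finally show "Z_V B r (M_V B sq (f0_V B chi)) f x = KK * om * lj * f x" by (simp add: ZV_eq)
qed


lemma ind_Z:
  assumes ev: "even CARD('n)" and om: "\<forall>f\<in>W. \<rho> (mat (-1)) f = (\<lambda>x. om * f x)"
    and lj: "\<forall>f\<in>W. opr SOG \<rho> cj f = (\<lambda>x. lj * f x)" and F: "F \<in> ind_space B W \<rho>"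
  shows "Z_V B (ind_act B) (M_V B sq (f0_V B chi)) F = (\<lambda>y. (KK * om * lj) * F y)"
proof
  fix y :: "('f^'n^'n) \<times> 'x"
  obtain g' x where y: "y = (g', x)" by (cases y)
  have FW: "\<forall>g\<in>OG. (\<lambda>x. F (g, x)) \<in> W" and F0: "\<forall>g. g \<notin> OG \<longrightarrow> (\<lambda>x. F (g, x)) = (\<lambda>_. 0)"
    and Fh: "\<forall>h\<in>SOG. \<forall>g\<in>OG. (\<lambda>x. F (h ** g, x)) = \<rho> h (\<lambda>x. F (g, x))"
    using F by (auto simp: ind_space_def)
  have Z: "Z_V B (ind_act B) (M_V B sq (f0_V B chi)) F y = (\<Sum>g\<in>OG. F0 B sq chi g * ind_act B g F (g', x))"
    by (simp add: ZV_eq y)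
  show "Z_V B (ind_act B) (M_V B sq (f0_V B chi)) F y = KK * om * lj * F y"
  proof (cases "g' \<in> OG")
    case False
    have "F (g', x) = 0" using F0 False by (metis (mono_tags) fun_cong)
    then show ?thesis using Z False by (simp add: ind_act_def y)
  next
    case True
    obtain gi where gi: "gi \<in> OG" "g' ** gi = mat 1" "gi ** g' = mat 1" using O_inv[OF True B_nondeg] by blast
    define \<psi> where "\<psi> = (\<lambda>x. F (g', x))"
    have \<psi>W: "\<psi> \<in> W" using FW True by (simp add: \<psi>_def)
    have conjSO: "g' ** g ** gi \<in> SOG" if g: "g \<in> SOG" for g
    proof -
      have gO: "g \<in> OG" using g by (simp add: SO_iff)
      have "g' ** g ** gi \<in> OG" by (rule orth_mult[OF orth_mult[OF True gO] gi(1)])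
      moreover have "det (g' ** g ** gi) = 1"
      proof -
        have "det (g' ** g ** gi) = det g' * det gi * det g" by (simp add: det_mul)
        also have "det g' * det gi = 1" using gi(2) by (metis det_mul det_I)
        finally show ?thesis using g by (simp add: SO_iff)
      qed
      ultimately show ?thesis by (simp add: SO_iff)
    qed
    have conjSO2: "gi ** h ** g' \<in> SOG" if h: "h \<in> SOG" for h
    proof -
      have hO: "h \<in> OG" using h by (simp add: SO_iff)
      have "gi ** h ** g' \<in> OG" by (rule orth_mult[OF orth_mult[OF gi(1) hO] True])
      moreover have "det (gi ** h ** g') = 1"
      proof -
        have "det (gi ** h ** g') = det gi * det g' * det h" by (simp add: det_mul)
        also have "det gi * det g' = 1" using gi(3) by (metis det_mul det_I)
        finally show ?thesis using h by (simp add: SO_iff)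
      qed
      ultimately show ?thesis by (simp add: SO_iff)
    qed
    have "(\<Sum>g\<in>OG. F0 B sq chi g * ind_act B g F (g', x)) = (\<Sum>g\<in>OG. F0 B sq chi g * F (g' ** g, x))"
      using True by (simp add: ind_act_def)
    also have "\<dots> = (\<Sum>g\<in>OG - SOG. F0 B sq chi g * F (g' ** g, x)) + (\<Sum>g\<in>SOG. F0 B sq chi g * F (g' ** g, x))"
      by (rule sum.subset_diff[OF SO_sub]) simp
    also have "(\<Sum>g\<in>OG - SOG. F0 B sq chi g * F (g' ** g, x)) = 0" using F_off_zero_even[OF ev] by simp
    also have "(\<Sum>g\<in>SOG. F0 B sq chi g * F (g' ** g, x)) = (\<Sum>g\<in>SOG. F0 B sq chi g * \<rho> (g' ** g ** gi) \<psi> x)"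
    proof (rule sum.cong[OF refl])
      fix g assume g: "g \<in> SOG"
      have e: "g' ** g = (g' ** g ** gi) ** g'"
        by (metis gi(3) matrix_mul_assoc matrix_mul_rid)
      have "(\<lambda>x. F (g' ** g, x)) = (\<lambda>x. F ((g' ** g ** gi) ** g', x))"
        by (simp only: e[symmetric])
      also have "\<dots> = \<rho> (g' ** g ** gi) \<psi>"
        unfolding \<psi>_def by (rule Fh[rule_format, OF conjSO[OF g] True])
      finally have "(\<lambda>x. F (g' ** g, x)) = \<rho> (g' ** g ** gi) \<psi>" .
      then show "F0 B sq chi g * F (g' ** g, x) = F0 B sq chi g * \<rho> (g' ** g ** gi) \<psi> x"
        by (metis (mono_tags) fun_cong)
    qed
    also have "\<dots> = (\<Sum>h\<in>SOG. F0 B sq chi h * \<rho> h \<psi> x)"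
    proof (rule sum.reindex_bij_witness[where j = "\<lambda>g. g' ** g ** gi" and i = "\<lambda>h. gi ** h ** g'"])
      fix a assume a: "a \<in> SOG"
      show "gi ** (g' ** a ** gi) ** g' = a"
        by (metis gi(3) matrix_mul_assoc matrix_mul_lid matrix_mul_rid)
      show "g' ** a ** gi \<in> SOG" by (rule conjSO[OF a])
      have aO: "a \<in> OG" "g' ** a ** gi \<in> OG" using a conjSO[OF a] by (auto simp: SO_iff)
      have "det (mat 1 - g' ** a ** gi) = det (mat 1 - a)" by (rule det_conj_minus[OF gi(2)])
      then show "F0 B sq chi (g' ** a ** gi) * \<rho> (g' ** a ** gi) \<psi> x = F0 B sq chi a * \<rho> (g' ** a ** gi) \<psi> x"
        using Fval[OF aO(1)] Fval[OF aO(2)] by simp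
    next
      fix b assume b: "b \<in> SOG"
      show "g' ** (gi ** b ** g') ** gi = b"
        by (metis gi(2) matrix_mul_assoc matrix_mul_lid matrix_mul_rid)
      show "gi ** b ** g' \<in> SOG" by (rule conjSO2[OF b])
    qed
    also have "\<dots> = KK * om * lj * \<psi> x" by (rule Zso[OF ev om lj \<psi>W])
    finally show ?thesis using Z by (simp add: y \<psi>_def)
  qed
qed

lemma ind_nz: "\<exists>F\<in>ind_space B W \<rho>. F \<noteq> (\<lambda>_. 0)"
proof -
  obtain f0 where f0: "f0 \<in> W" "f0 \<noteq> (\<lambda>_. 0)" using Wnz by blast
  then obtain x0 where x0: "f0 x0 \<noteq> 0" by auto
  define F where "F = (\<lambda>(g, x). if g \<in> SOG then \<rho> g f0 x else 0)"
  have Fg: "(\<lambda>x. F (g, x)) = (if g \<in> SOG then \<rho> g f0 else (\<lambda>_. 0))" for g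
    by (auto simp: F_def)
  have "F \<in> ind_space B W \<rho>"
    unfolding ind_space_def mem_Collect_eq
  proof (intro conjI allI ballI impI)
    fix g assume "g \<in> OG"
    then show "(\<lambda>x. F (g, x)) \<in> W" using rhoW[OF _ f0(1)] csub_zero[OF csW] by (simp add: Fg)
  next
    fix g assume "g \<notin> OG"
    then show "(\<lambda>x. F (g, x)) = (\<lambda>_. 0)" using SO_sub by (auto simp: Fg)
  next
    fix h g assume h: "h \<in> SOG" and g: "g \<in> OG"
    show "(\<lambda>x. F (h ** g, x)) = \<rho> h (\<lambda>x. F (g, x))"
    proof (cases "g \<in> SOG")
      case True
      then show ?thesis using SOclosed h rho_mult[OF h True f0(1)] by (simp add: Fg)
    next
      case False
      have "h ** g \<notin> SOG" using SO_mult_iff[of h g] h g False by (auto simp: SO_iff)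
      then show ?thesis using False linop_zero[OF rho_lin[OF h] csW] by (simp add: Fg)
    qed
  qed
  moreover have "F \<noteq> (\<lambda>_. 0)"
  proof
    assume "F = (\<lambda>_. 0)"
    then have "F (mat 1, x0) = 0" by simp
    then show False using x0 rho_one[OF f0(1)] by (simp add: F_def SO_one)
  qed
  ultimately show ?thesis by blast
qed

theorem main_result:
  "Gamma_SO B sq chi W \<rho> = KK * j_factor B sq chi W \<rho> *
     (if even CARD('n) then central_char W \<rho> (mat (-1)) else 1)"
proof -
  obtain lj where lj: "\<forall>f\<in>W. opr SOG \<rho> cj f = (\<lambda>x. lj * f x)" using lj_ex by blast
  have jv: "j_factor B sq chi W \<rho> = lj" by (rule j_val[OF lj])
  show ?thesis
  proof (cases "odd CARD('n)")
    case True
    let ?P = "\<lambda>r. is_rep OG W r \<and> (\<forall>g\<in>SOG. \<forall>f\<in>W. r g f = \<rho> g f) \<and> (\<forall>f\<in>W. r (mat (-1)) f = f)"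
    have "?P (SOME r. ?P r)" by (rule someI[of ?P rho2]) (rule rho2_props[OF True])
    then have P: "is_rep OG W (SOME r. ?P r)" "\<forall>g\<in>SOG. \<forall>f\<in>W. (SOME r. ?P r) g f = \<rho> g f"
      "\<forall>f\<in>W. (SOME r. ?P r) (mat (-1)) f = f" by blast+
    have "Gamma_SO B sq chi W \<rho> = Gamma_O B sq chi W (SOME r. ?P r)"
      using True by (simp add: Gamma_SO_def)
    also have "\<dots> = KK * lj"
      unfolding Gamma_O_def by (rule scalar_of_eq[OF Wnz]) (use odd_Z[OF True P lj] in blast)
    finally show ?thesis using True jv by simp
  next
    case False
    then have ev: "even CARD('n)" by simp
    obtain om where om: "\<forall>f\<in>W. \<rho> (mat (-1)) f = (\<lambda>x. om * f x)" using om_ex[OF ev] by blast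
    have cc: "central_char W \<rho> (mat (-1)) = om"
      unfolding central_char_def by (rule scalar_of_eq[OF Wnz om])
    have "Gamma_SO B sq chi W \<rho> = KK * om * lj"
    proof (cases "\<exists>r. irred_rep OG W r \<and> (\<forall>g\<in>SOG. \<forall>f\<in>W. r g f = \<rho> g f)")
      case True
      let ?P = "\<lambda>r. irred_rep OG W r \<and> (\<forall>g\<in>SOG. \<forall>f\<in>W. r g f = \<rho> g f)"
      have "?P (SOME r. ?P r)" using True by (rule someI_ex)
      then have P: "\<forall>g\<in>SOG. \<forall>f\<in>W. (SOME r. ?P r) g f = \<rho> g f" by blast
      have "Gamma_SO B sq chi W \<rho> = Gamma_O B sq chi W (SOME r. ?P r)"
        using True ev by (simp add: Gamma_SO_def)
      also have "\<dots> = KK * om * lj"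
        unfolding Gamma_O_def by (rule scalar_of_eq[OF Wnz]) (use Zeven[OF ev om lj P] in blast)
      finally show ?thesis .
    next
      case False
      have no: "\<not> odd CARD('n)" using ev by simp
      have "Gamma_SO B sq chi W \<rho> = Gamma_O B sq chi (ind_space B W \<rho>) (ind_act B)"
        unfolding Gamma_SO_def if_not_P[OF no] if_not_P[OF False] ..
      also have "\<dots> = KK * om * lj"
        unfolding Gamma_O_def by (rule scalar_of_eq[OF ind_nz]) (use ind_Z[OF ev om lj] in blast)
      finally show ?thesis .
    qed
    then show ?thesis using ev jv cc by (simp add: mult_ac)
  qed
qed

end


theorem mainTheorem11:
  fixes B :: "'f::{finite,field}^'n::finite^'n"
    and sq :: "'c::field"
    and chi :: "'f \<Rightarrow> 'c"
    and W :: "('x \<Rightarrow> 'c) set"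
    and \<rho> :: "'f^'n^'n \<Rightarrow> ('x \<Rightarrow> 'c) \<Rightarrow> ('x \<Rightarrow> 'c)"
  assumes q_odd: "odd CARD('f)"
    and C_alg_closed: "\<forall>p :: 'c poly. 0 < degree p \<longrightarrow> (\<exists>z. poly p z = 0)"
    and C_char: "of_nat CARD('f) \<noteq> (0::'c)"
    and sq: "sq ^ 2 = of_nat CARD('f)"
    and B_sym: "transpose B = B"
    and B_nondeg: "det B \<noteq> 0"
    and chi_mult: "\<forall>a b. a \<noteq> 0 \<longrightarrow> b \<noteq> 0 \<longrightarrow> chi (a * b) = chi a * chi b"
    and chi_nz: "\<forall>a. a \<noteq> 0 \<longrightarrow> chi a \<noteq> 0"
    and irr: "irred_rep (sorth_group B) W \<rho>"
    and char2: "even CARD('n) \<longrightarrow> (2::'c) \<noteq> 0"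
  shows "Gamma_SO B sq chi W \<rho> =
           inverse (chi (-2)) ^ CARD('n) * j_factor B sq chi W \<rho> *
           (if even CARD('n) then central_char W \<rho> (mat (-1)) else 1)"
  proof -
  interpret main_ctx B sq chi W \<rho>
    by unfold_locales (fact q_odd C_alg_closed B_nondeg chi_mult chi_nz irr)+
  show ?thesis using main_result by (simp add: KK_def)
qed

end
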